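(* Let $\widetilde{\mathbf S}=\prod_{i=1}^m\widetilde{\mathbf S}_i$ be a semisimple algebra over an algebraically closed field $\mathbbm k$ with simple components $\widetilde{\mathbf S}_i\cong\mathrm{Mat}(d_i,\mathbbm k)$, and let $\mathbf S=\prod_{k=1}^r\mathbf S_k$ be a subalgebra with $\mathbf S_k\cong\mathbbm k$ and $\operatorname{length}_{\mathbf S}(\widetilde{\mathbf S}\otimes_{\mathbf S}\mathbf S_k)\le2$ for all $1\le k\le r$. Then for each $1\le k\le r$ one of the following holds: (1) $\mathbf S_k=\widetilde{\mathbf S}_i$ for some $i$; (2) $\mathbf S_k\subset\widetilde{\mathbf S}_i\times\widetilde{\mathbf S}_j$ for some $i\ne j$ with $\widetilde{\mathbf S}_i\cong\widetilde{\mathbf S}_j\cong\mathbbm k$, and $\mathbf S_k\cong\mathbbm k$ embeds into $\widetilde{\mathbf S}_i\times\widetilde{\mathbf S}_j\cong\mathbbm k\times\mathbbm k$ diagonally; (3) there is an index $q\ne k$ such that $\mathbf S_k\times\mathbf S_q\subset\widetilde{\mathbf S}_i$ for some $i$ with $\widetilde{\mathbf S}_i\cong\mathrm{Mat}(2,\mathbbm k)$, and this isomorphism can be chosen so that $\mathbf S_k\times\mathbf S_q$ embeds into $\widetilde{\mathbf S}_i$ as the subalgebra of diagonal matrices.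
   Context: Algebras are finite-dimensional over $\mathbbm k$. Here $\mathbf S_k$ is regarded as a (simple) left $\mathbf S$-module, and $\widetilde{\mathbf S}\otimes_{\mathbf S}\mathbf S_k$ as a left $\mathbf S$-module by restriction. *)

theory Defs
  imports "HOL-Computational_Algebra.Polynomial" "Jordan_Normal_Form.Matrix"
begin

text \<open>Concrete model of the semisimple algebra
  St = Mat(d 0) x ... x Mat(d (m-1)) over k: elements are functions
  f :: nat => 'a mat with f i a (d i) x (d i) matrix for i < m and
  the canonical 0 x 0 matrix for i >= m.  Components are indexed 0..m-1.\<close>

definition zcomp :: "(nat \<Rightarrow> nat) \<Rightarrow> nat \<Rightarrow> nat \<Rightarrow> 'a::semiring_1 mat" where
  "zcomp d m l = (if l < m then 0\<^sub>m (d l) (d l) else 0\<^sub>m 0 0)"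

definition ocomp :: "(nat \<Rightarrow> nat) \<Rightarrow> nat \<Rightarrow> nat \<Rightarrow> 'a::semiring_1 mat" where
  "ocomp d m l = (if l < m then 1\<^sub>m (d l) else 0\<^sub>m 0 0)"

definition Stilde :: "(nat \<Rightarrow> nat) \<Rightarrow> nat \<Rightarrow> (nat \<Rightarrow> 'a::semiring_1 mat) set" where
  "Stilde d m = {f. (\<forall>i<m. f i \<in> carrier_mat (d i) (d i)) \<and> (\<forall>i\<ge>m. f i = 0\<^sub>m 0 0)}"

definition tzero :: "(nat \<Rightarrow> nat) \<Rightarrow> nat \<Rightarrow> nat \<Rightarrow> 'a::semiring_1 mat" where
  "tzero d m = zcomp d m"

definition tone :: "(nat \<Rightarrow> nat) \<Rightarrow> nat \<Rightarrow> nat \<Rightarrow> 'a::semiring_1 mat" where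
  "tone d m = ocomp d m"

definition tadd :: "(nat \<Rightarrow> 'a::semiring_1 mat) \<Rightarrow> (nat \<Rightarrow> 'a mat) \<Rightarrow> nat \<Rightarrow> 'a mat" where
  "tadd f g = (\<lambda>l. f l + g l)"

definition tmul :: "(nat \<Rightarrow> 'a::semiring_1 mat) \<Rightarrow> (nat \<Rightarrow> 'a mat) \<Rightarrow> nat \<Rightarrow> 'a mat" where
  "tmul f g = (\<lambda>l. f l * g l)"

definition tsmult :: "'a::semiring_1 \<Rightarrow> (nat \<Rightarrow> 'a mat) \<Rightarrow> nat \<Rightarrow> 'a mat" where
  "tsmult c f = (\<lambda>l. c \<cdot>\<^sub>m f l)"

definition Scomp :: "(nat \<Rightarrow> nat) \<Rightarrow> nat \<Rightarrow> nat \<Rightarrow> (nat \<Rightarrow> 'a::semiring_1 mat) set" where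
  "Scomp d m i = {f \<in> Stilde d m. \<forall>l. l \<noteq> i \<longrightarrow> f l = zcomp d m l}"

definition kpow :: "nat \<Rightarrow> (nat \<Rightarrow> 'a::field) set" where
  "kpow r = {v. \<forall>l\<ge>r. v l = 0}"

definition kunit :: "nat \<Rightarrow> nat \<Rightarrow> 'a::field" where
  "kunit r = (\<lambda>l. if l < r then 1 else 0)"

text \<open>phi is an injective unital k-algebra homomorphism k^r -> St; its image is
  the subalgebra S, and S_k is the image of the k-th factor of k^r.\<close>
definition alg_embedding ::
  "(nat \<Rightarrow> nat) \<Rightarrow> nat \<Rightarrow> nat \<Rightarrow> ((nat \<Rightarrow> 'a::field) \<Rightarrow> nat \<Rightarrow> 'a mat) \<Rightarrow> bool" where
  "alg_embedding d m r \<phi> \<longleftrightarrow>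
     inj_on \<phi> (kpow r) \<and> \<phi> ` kpow r \<subseteq> Stilde d m \<and>
     (\<forall>v\<in>kpow r. \<forall>w\<in>kpow r. \<phi> (\<lambda>l. v l + w l) = tadd (\<phi> v) (\<phi> w)) \<and>
     (\<forall>v\<in>kpow r. \<forall>w\<in>kpow r. \<phi> (\<lambda>l. v l * w l) = tmul (\<phi> v) (\<phi> w)) \<and>
     (\<forall>c. \<forall>v\<in>kpow r. \<phi> (\<lambda>l. c * v l) = tsmult c (\<phi> v)) \<and>
     \<phi> (kunit r) = tone d m"

definition Ssub :: "nat \<Rightarrow> ((nat \<Rightarrow> 'a::field) \<Rightarrow> nat \<Rightarrow> 'a mat) \<Rightarrow> (nat \<Rightarrow> 'a mat) set" where
  "Ssub r \<phi> = \<phi> ` kpow r"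

definition Sfac :: "((nat \<Rightarrow> 'a::field) \<Rightarrow> nat \<Rightarrow> 'a mat) \<Rightarrow> nat \<Rightarrow> (nat \<Rightarrow> 'a mat) set" where
  "Sfac \<phi> k = \<phi> ` {v. \<forall>l. l \<noteq> k \<longrightarrow> v l = 0}"

definition sidem :: "((nat \<Rightarrow> 'a::field) \<Rightarrow> nat \<Rightarrow> 'a mat) \<Rightarrow> nat \<Rightarrow> nat \<Rightarrow> 'a mat" where
  "sidem \<phi> k = \<phi> (\<lambda>l. if l = k then 1 else 0)"

text \<open>The left S-module St (x)_S S_k, realised as St e_k with S acting by left
  multiplication (canonical isomorphism a (x) s |-> a s e_k).\<close>
definition tens_mod :: "(nat \<Rightarrow> nat) \<Rightarrow> nat \<Rightarrow> ((nat \<Rightarrow> 'a::field) \<Rightarrow> nat \<Rightarrow> 'a mat) \<Rightarrow> nat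
    \<Rightarrow> (nat \<Rightarrow> 'a mat) set" where
  "tens_mod d m \<phi> k = {tmul a (sidem \<phi> k) | a. a \<in> Stilde d m}"

definition is_submodule :: "(nat \<Rightarrow> nat) \<Rightarrow> nat \<Rightarrow> (nat \<Rightarrow> 'a::field mat) set
    \<Rightarrow> (nat \<Rightarrow> 'a mat) set \<Rightarrow> (nat \<Rightarrow> 'a mat) set \<Rightarrow> bool" where
  "is_submodule d m S M N \<longleftrightarrow> N \<subseteq> M \<and> tzero d m \<in> N \<and>
     (\<forall>x\<in>N. \<forall>y\<in>N. tadd x y \<in> N) \<and> (\<forall>s\<in>S. \<forall>x\<in>N. tmul s x \<in> N)"

definition length_le :: "(nat \<Rightarrow> nat) \<Rightarrow> nat \<Rightarrow> (nat \<Rightarrow> 'a::field mat) set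
    \<Rightarrow> (nat \<Rightarrow> 'a mat) set \<Rightarrow> nat \<Rightarrow> bool" where
  "length_le d m S M n \<longleftrightarrow>
     (\<forall>(c :: nat \<Rightarrow> (nat \<Rightarrow> 'a mat) set) l.
        (\<forall>i\<le>l. is_submodule d m S M (c i)) \<and> (\<forall>i<l. c i \<subset> c (Suc i)) \<longrightarrow> l \<le> n)"

definition mat_alg_iso :: "nat \<Rightarrow> ('a::field mat \<Rightarrow> 'a mat) \<Rightarrow> bool" where
  "mat_alg_iso n \<psi> \<longleftrightarrow> bij_betw \<psi> (carrier_mat n n) (carrier_mat n n) \<and>
     (\<forall>A\<in>carrier_mat n n. \<forall>B\<in>carrier_mat n n. \<psi> (A + B) = \<psi> A + \<psi> B \<and> \<psi> (A * B) = \<psi> A * \<psi> B) \<and>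
     (\<forall>c. \<forall>A\<in>carrier_mat n n. \<psi> (c \<cdot>\<^sub>m A) = c \<cdot>\<^sub>m \<psi> A) \<and>
     \<psi> (1\<^sub>m n) = 1\<^sub>m n"

end

theory Submission
  imports Defs "Jordan_Normal_Form.Determinant"
begin



definition DD :: "(nat \<Rightarrow> nat) \<Rightarrow> nat \<Rightarrow> nat \<Rightarrow> nat" where
  "DD d m l = (if l < m then d l else 0)"

lemma carrier00: "A \<in> carrier_mat 0 0 \<Longrightarrow> A = 0\<^sub>m 0 0"
  by (rule eq_matI) auto

lemma zcomp_DD: "zcomp d m l = 0\<^sub>m (DD d m l) (DD d m l)"
  by (simp add: zcomp_def DD_def)

lemma ocomp_DD: "ocomp d m l = 1\<^sub>m (DD d m l)"
  by (auto simp add: ocomp_def DD_def)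

lemma Stilde_iff: "f \<in> Stilde d m \<longleftrightarrow> (\<forall>l. f l \<in> carrier_mat (DD d m l) (DD d m l))"
proof
  assume "f \<in> Stilde d m"
  then show "\<forall>l. f l \<in> carrier_mat (DD d m l) (DD d m l)"
    unfolding Stilde_def DD_def by auto
next
  assume a: "\<forall>l. f l \<in> carrier_mat (DD d m l) (DD d m l)"
  have "f l = 0\<^sub>m 0 0" if "l \<ge> m" for l
    using a[rule_format, of l] that by (intro carrier00) (simp add: DD_def)
  moreover have "f l \<in> carrier_mat (d l) (d l)" if "l < m" for l
    using a[rule_format, of l] that by (simp add: DD_def)
  ultimately show "f \<in> Stilde d m" unfolding Stilde_def by auto
qed

lemma StildeD: "f \<in> Stilde d m \<Longrightarrow> f l \<in> carrier_mat (DD d m l) (DD d m l)"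
  using Stilde_iff by blast

lemma StildeI: "(\<And>l. f l \<in> carrier_mat (DD d m l) (DD d m l)) \<Longrightarrow> f \<in> Stilde d m"
  using Stilde_iff by blast

lemma tzero_app: "tzero d m l = 0\<^sub>m (DD d m l) (DD d m l)"
  by (simp add: tzero_def zcomp_DD)

lemma tzero_St[simp]: "tzero d m \<in> Stilde d m"
  by (rule StildeI) (simp only: tzero_app zero_carrier_mat)
lemma tone_St[simp]: "tone d m \<in> Stilde d m"
  by (rule StildeI) (simp only: tone_def ocomp_DD one_carrier_mat)
lemma tadd_St[simp]: assumes "f \<in> Stilde d m" "g \<in> Stilde d m" shows "tadd f g \<in> Stilde d m"
proof (rule StildeI)
  fix l show "tadd f g l \<in> carrier_mat (DD d m l) (DD d m l)"
    using StildeD[OF assms(1), of l] StildeD[OF assms(2), of l] unfolding tadd_def by simp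
qed
lemma tmul_St[simp]: assumes "f \<in> Stilde d m" "g \<in> Stilde d m" shows "tmul f g \<in> Stilde d m"
proof (rule StildeI)
  fix l show "tmul f g l \<in> carrier_mat (DD d m l) (DD d m l)"
    using StildeD[OF assms(1), of l] StildeD[OF assms(2), of l] unfolding tmul_def by simp
qed
lemma tsmult_St[simp]: assumes "f \<in> Stilde d m" shows "tsmult c f \<in> Stilde d m"
proof (rule StildeI)
  fix l show "tsmult c f l \<in> carrier_mat (DD d m l) (DD d m l)"
    using StildeD[OF assms(1), of l] unfolding tsmult_def by simp
qed

lemma St_ext: assumes "f \<in> Stilde d m" "g \<in> Stilde d m" "\<And>l. l < m \<Longrightarrow> f l = g l" shows "f = g"
proof (rule ext)
  fix l show "f l = g l"
  proof (cases "l < m")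
    case True then show ?thesis using assms by blast
  next
    case False then show ?thesis using assms(1,2) unfolding Stilde_def by auto
  qed
qed

lemma tmul_assoc: assumes "f \<in> Stilde d m" "g \<in> Stilde d m" "h \<in> Stilde d m"
  shows "tmul f (tmul g h) = tmul (tmul f g) h"
proof (rule ext)
  fix l
  have "f l \<in> carrier_mat (DD d m l) (DD d m l)" "g l \<in> carrier_mat (DD d m l) (DD d m l)"
       "h l \<in> carrier_mat (DD d m l) (DD d m l)" using assms by (auto intro: StildeD)
  then show "tmul f (tmul g h) l = tmul (tmul f g) h l" unfolding tmul_def
    by (simp add: assoc_mult_mat)
qed

lemma tmul_tadd_left: assumes "f \<in> Stilde d m" "g \<in> Stilde d m" "h \<in> Stilde d m"
  shows "tmul (tadd f g) h = tadd (tmul f h) (tmul g h)"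
proof (rule ext)
  fix l
  have "f l \<in> carrier_mat (DD d m l) (DD d m l)" "g l \<in> carrier_mat (DD d m l) (DD d m l)"
       "h l \<in> carrier_mat (DD d m l) (DD d m l)" using assms by (auto intro: StildeD)
  then show "tmul (tadd f g) h l = tadd (tmul f h) (tmul g h) l" unfolding tmul_def tadd_def
    by (simp add: add_mult_distrib_mat)
qed

lemma tmul_tadd_right: assumes "f \<in> Stilde d m" "g \<in> Stilde d m" "h \<in> Stilde d m"
  shows "tmul h (tadd f g) = tadd (tmul h f) (tmul h g)"
proof (rule ext)
  fix l
  have "f l \<in> carrier_mat (DD d m l) (DD d m l)" "g l \<in> carrier_mat (DD d m l) (DD d m l)"
       "h l \<in> carrier_mat (DD d m l) (DD d m l)" using assms by (auto intro: StildeD)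
  then show "tmul h (tadd f g) l = tadd (tmul h f) (tmul h g) l" unfolding tmul_def tadd_def
    by (simp add: mult_add_distrib_mat)
qed

lemma tmul_tsmult_left: fixes f :: "nat \<Rightarrow> 'a::comm_ring_1 mat" assumes "f \<in> Stilde d m" "g \<in> Stilde d m"
  shows "tmul (tsmult c f) g = tsmult c (tmul f g)"
proof (rule ext)
  fix l
  have "f l \<in> carrier_mat (DD d m l) (DD d m l)" "g l \<in> carrier_mat (DD d m l) (DD d m l)"
     using assms by (auto intro: StildeD)
  then show "tmul (tsmult c f) g l = tsmult c (tmul f g) l" unfolding tmul_def tsmult_def
    by (rule mult_smult_assoc_mat)
qed

lemma tmul_tsmult_right: fixes f :: "nat \<Rightarrow> 'a::comm_ring_1 mat" assumes "f \<in> Stilde d m" "g \<in> Stilde d m"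
  shows "tmul f (tsmult c g) = tsmult c (tmul f g)"
proof (rule ext)
  fix l
  have "f l \<in> carrier_mat (DD d m l) (DD d m l)" "g l \<in> carrier_mat (DD d m l) (DD d m l)"
     using assms by (auto intro: StildeD)
  then show "tmul f (tsmult c g) l = tsmult c (tmul f g) l" unfolding tmul_def tsmult_def
    by (rule mult_smult_distrib)
qed

lemma tmul_tzero_left: assumes "f \<in> Stilde d m" shows "tmul (tzero d m) f = tzero d m"
proof (rule ext)
  fix l
  have "f l \<in> carrier_mat (DD d m l) (DD d m l)" using assms by (auto intro: StildeD)
  then show "tmul (tzero d m) f l = tzero d m l" unfolding tmul_def tzero_app by simp
qed

lemma tmul_tzero_right: assumes "f \<in> Stilde d m" shows "tmul f (tzero d m) = tzero d m"
proof (rule ext)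
  fix l
  have "f l \<in> carrier_mat (DD d m l) (DD d m l)" using assms by (auto intro: StildeD)
  then show "tmul f (tzero d m) l = tzero d m l" unfolding tmul_def tzero_app by simp
qed

lemma tadd_tzero: assumes "f \<in> Stilde d m" shows "tadd f (tzero d m) = f"
proof (rule ext)
  fix l
  have "f l \<in> carrier_mat (DD d m l) (DD d m l)" using assms by (auto intro: StildeD)
  then show "tadd f (tzero d m) l = f l" unfolding tadd_def tzero_app by simp
qed

lemma tsmult_zero: assumes "f \<in> Stilde d m" shows "tsmult 0 f = tzero d m"
proof (rule ext)
  fix l
  have "f l \<in> carrier_mat (DD d m l) (DD d m l)" using assms by (auto intro: StildeD)
  then show "tsmult 0 f l = tzero d m l" unfolding tsmult_def tzero_app
    by (intro eq_matI) auto
qed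

lemma tsmult_tzero: "tsmult c (tzero d m) = tzero d m"
  unfolding tsmult_def by (rule ext) (simp add: tzero_app)

lemma one_smult_mat[simp]: "(1::'a::semiring_1) \<cdot>\<^sub>m A = A"
  by (rule eq_matI) auto

lemma tsmult_one: "tsmult 1 f = f"
  unfolding tsmult_def by (rule ext) simp


definition dl :: "nat \<Rightarrow> nat \<Rightarrow> 'a::field" where
  "dl q = (\<lambda>l. if l = q then 1 else 0)"

lemma smult_zero_left_mat: "A \<in> carrier_mat n n' \<Longrightarrow> (0::'a::semiring_1) \<cdot>\<^sub>m A = 0\<^sub>m n n'"
  by (rule eq_matI) auto

lemma smult_smult_mat: "(a::'a::comm_ring_1) \<cdot>\<^sub>m (b \<cdot>\<^sub>m A) = (a * b) \<cdot>\<^sub>m A"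
  by (rule eq_matI) (auto simp: ac_simps)

lemma tsmult_tsmult: "tsmult (a::'a::comm_ring_1) (tsmult b f) = tsmult (a * b) f"
  unfolding tsmult_def by (rule ext) (simp add: smult_smult_mat)

lemma tzero_tadd: assumes "f \<in> Stilde d m" shows "tadd (tzero d m) f = f"
proof (rule ext)
  fix l
  have "f l \<in> carrier_mat (DD d m l) (DD d m l)" using assms by (auto intro: StildeD)
  then show "tadd (tzero d m) f l = f l" unfolding tadd_def tzero_app by simp
qed

lemma lin3_add: fixes Y1 :: "'a::comm_ring_1 mat" assumes "Y1 \<in> carrier_mat n n" "Y2 \<in> carrier_mat n n" "Y3 \<in> carrier_mat n n"
  shows "(a \<cdot>\<^sub>m Y1 + b \<cdot>\<^sub>m Y2 + c \<cdot>\<^sub>m Y3) + (a' \<cdot>\<^sub>m Y1 + b' \<cdot>\<^sub>m Y2 + c' \<cdot>\<^sub>m Y3)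
     = ((a + a') \<cdot>\<^sub>m Y1 + (b + b') \<cdot>\<^sub>m Y2 + (c + c') \<cdot>\<^sub>m Y3)"
  using assms by (intro eq_matI) (auto simp: algebra_simps)

definition span3 where
  "span3 y1 y2 y3 = {tadd (tadd (tsmult a y1) (tsmult b y2)) (tsmult c y3) | a b c. True}"

lemma tadd_lin3: fixes y1 :: "nat \<Rightarrow> 'a::comm_ring_1 mat" assumes "y1 \<in> Stilde d m" "y2 \<in> Stilde d m" "y3 \<in> Stilde d m"
  shows "tadd (tadd (tadd (tsmult a y1) (tsmult b y2)) (tsmult c y3))
              (tadd (tadd (tsmult a' y1) (tsmult b' y2)) (tsmult c' y3))
       = tadd (tadd (tsmult (a+a') y1) (tsmult (b+b') y2)) (tsmult (c+c') y3)"
proof (rule ext)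
  fix l
  show "tadd (tadd (tadd (tsmult a y1) (tsmult b y2)) (tsmult c y3))
              (tadd (tadd (tsmult a' y1) (tsmult b' y2)) (tsmult c' y3)) l
       = tadd (tadd (tsmult (a+a') y1) (tsmult (b+b') y2)) (tsmult (c+c') y3) l"
    unfolding tadd_def tsmult_def
    by (rule lin3_add) (use assms StildeD in auto)
qed

locale LS =
  fixes d :: "nat \<Rightarrow> nat" and m r :: nat and \<phi> :: "(nat \<Rightarrow> 'a::field) \<Rightarrow> nat \<Rightarrow> 'a mat"
  assumes d_pos: "\<forall>i<m. 0 < d i" and emb: "alg_embedding d m r \<phi>"
begin

abbreviation "D \<equiv> DD d m"
abbreviation "e \<equiv> sidem \<phi>"

lemma phi_St: "v \<in> kpow r \<Longrightarrow> \<phi> v \<in> Stilde d m"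
  using emb unfolding alg_embedding_def by blast
lemma phi_add: "v \<in> kpow r \<Longrightarrow> w \<in> kpow r \<Longrightarrow> \<phi> (\<lambda>l. v l + w l) = tadd (\<phi> v) (\<phi> w)"
  using emb unfolding alg_embedding_def by blast
lemma phi_mul: "v \<in> kpow r \<Longrightarrow> w \<in> kpow r \<Longrightarrow> \<phi> (\<lambda>l. v l * w l) = tmul (\<phi> v) (\<phi> w)"
  using emb unfolding alg_embedding_def by blast
lemma phi_smul: "v \<in> kpow r \<Longrightarrow> \<phi> (\<lambda>l. c * v l) = tsmult c (\<phi> v)"
  using emb unfolding alg_embedding_def by blast
lemma phi_one: "\<phi> (kunit r) = tone d m"
  using emb unfolding alg_embedding_def by blast
lemma phi_inj: "inj_on \<phi> (kpow r)"
  using emb unfolding alg_embedding_def by blast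

lemma kpow_dl: "q < r \<Longrightarrow> dl q \<in> kpow r"
  by (simp add: kpow_def dl_def)
lemma kpow_add: "v \<in> kpow r \<Longrightarrow> w \<in> kpow r \<Longrightarrow> (\<lambda>l. v l + w l) \<in> kpow r"
  by (simp add: kpow_def)
lemma kpow_mul: "v \<in> kpow r \<Longrightarrow> w \<in> kpow r \<Longrightarrow> (\<lambda>l. v l * w l) \<in> kpow r"
  by (simp add: kpow_def)
lemma kpow_smul: "v \<in> kpow r \<Longrightarrow> (\<lambda>l. c * v l) \<in> kpow r"
  by (simp add: kpow_def)
lemma kpow_zero: "(\<lambda>l. 0) \<in> kpow r"
  by (simp add: kpow_def)
lemma kpow_unit: "kunit r \<in> kpow r"
  by (simp add: kpow_def kunit_def)

lemma phi_zero: "\<phi> (\<lambda>l. 0) = tzero d m"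
proof -
  have "\<phi> (\<lambda>l. 0 * (0::'a)) = tsmult 0 (\<phi> (\<lambda>l. 0))"
    by (rule phi_smul[OF kpow_zero])
  also have "\<dots> = tzero d m" by (rule tsmult_zero[OF phi_St[OF kpow_zero]])
  finally show ?thesis by simp
qed

lemma e_def': "e q = \<phi> (dl q)"
  by (simp add: sidem_def dl_def)

lemma e_St: "q < r \<Longrightarrow> e q \<in> Stilde d m"
  unfolding e_def' by (rule phi_St[OF kpow_dl])

lemma e_carrier: "q < r \<Longrightarrow> e q l \<in> carrier_mat (D l) (D l)"
  using e_St StildeD by blast

lemma e_nz: assumes "q < r" shows "e q \<noteq> tzero d m"
proof
  assume "e q = tzero d m"
  then have "\<phi> (dl q) = \<phi> (\<lambda>l. 0)" using e_def' phi_zero by simp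
  then have "dl q = (\<lambda>l. 0::'a)" by (rule inj_onD[OF phi_inj _ kpow_dl[OF assms] kpow_zero])
  then show False by (metis dl_def one_neq_zero)
qed

lemma phi_mul_e: assumes "v \<in> kpow r" "q < r" shows "tmul (\<phi> v) (e q) = tsmult (v q) (e q)"
proof -
  have "tmul (\<phi> v) (e q) = \<phi> (\<lambda>l. v l * dl q l)"
    using phi_mul[OF assms(1) kpow_dl[OF assms(2)]] e_def' by simp
  also have "(\<lambda>l. v l * dl q l) = (\<lambda>l. v q * dl q l)" by (auto simp: dl_def)
  also have "\<phi> \<dots> = tsmult (v q) (e q)" using phi_smul[OF kpow_dl[OF assms(2)]] e_def' by simp
  finally show ?thesis .
qed

lemma e_idem: assumes "q < r" shows "tmul (e q) (e q) = e q"
  using phi_mul_e[OF kpow_dl[OF assms] assms] e_def' tsmult_one by (simp add: dl_def)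

lemma e_orth: assumes "p < r" "q < r" "p \<noteq> q" shows "tmul (e p) (e q) = tzero d m"
  using phi_mul_e[OF kpow_dl[OF assms(1)] assms(2)] e_def' tsmult_zero[OF e_St[OF assms(2)]]
    assms(3) by (simp add: dl_def)

lemma e_idem_l: "q < r \<Longrightarrow> e q l * e q l = e q l"
  using e_idem by (metis tmul_def)
lemma e_orth_l: "p < r \<Longrightarrow> q < r \<Longrightarrow> p \<noteq> q \<Longrightarrow> e p l * e q l = 0\<^sub>m (D l) (D l)"
  using e_orth tzero_app by (metis tmul_def)

lemma eig_act: assumes "v \<in> kpow r" "q < r" "y \<in> Stilde d m" "tmul (e q) y = y"
  shows "tmul (\<phi> v) y = tsmult (v q) y"
proof -
  have "tmul (\<phi> v) y = tmul (\<phi> v) (tmul (e q) y)" using assms(4) by simp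
  also have "\<dots> = tmul (tmul (\<phi> v) (e q)) y"
    by (rule tmul_assoc[OF phi_St[OF assms(1)] e_St[OF assms(2)] assms(3)])
  also have "\<dots> = tmul (tsmult (v q) (e q)) y" using phi_mul_e assms by simp
  also have "\<dots> = tsmult (v q) (tmul (e q) y)" by (rule tmul_tsmult_left[OF e_St[OF assms(2)] assms(3)])
  finally show ?thesis using assms(4) by simp
qed

lemma Sfac_eq: assumes "k < r" shows "Sfac \<phi> k = {tsmult c (e k) | c. True}"
proof -
  have "\<phi> v = tsmult (v k) (e k)" if "\<forall>l. l \<noteq> k \<longrightarrow> v l = 0" for v
  proof -
    have "v = (\<lambda>l. v k * dl k l)" using that by (auto simp: dl_def)
    then show ?thesis using phi_smul[OF kpow_dl[OF assms], of "v k"] e_def' by metis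
  qed
  moreover have "tsmult c (e k) = \<phi> (\<lambda>l. c * dl k l)" for c
    using phi_smul[OF kpow_dl[OF assms], of c] e_def' by simp
  moreover have "\<forall>l. l \<noteq> k \<longrightarrow> (\<lambda>l. c * dl k l) l = 0" for c by (simp add: dl_def)
  ultimately show ?thesis unfolding Sfac_def by blast
qed

lemma Zlemma: "n \<le> r \<Longrightarrow> (\<forall>x\<ge>n. v x = 0) \<Longrightarrow> (\<forall>q<n. v q \<noteq> 0 \<longrightarrow> e q l = 0\<^sub>m (D l) (D l))
   \<Longrightarrow> \<phi> v l = 0\<^sub>m (D l) (D l)"
proof (induction n arbitrary: v)
  case 0
  then have "v = (\<lambda>l. 0)" by auto
  then show ?case using phi_zero tzero_app by simp
next
  case (Suc n)
  define v' where "v' = (\<lambda>x. if x < n then v x else 0)"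
  have v'k: "v' \<in> kpow r" using Suc.prems(1) unfolding v'_def kpow_def by auto
  have "v = (\<lambda>x. v' x + v n * dl n x)" using Suc.prems(2) unfolding v'_def dl_def
    by (auto simp: not_less less_Suc_eq)
  have nr: "n < r" using Suc.prems(1) by simp
  have "\<phi> (\<lambda>x. v' x + v n * dl n x) = tadd (\<phi> v') (\<phi> (\<lambda>x. v n * dl n x))"
    by (rule phi_add[OF v'k kpow_smul[OF kpow_dl[OF nr]]])
  then have "\<phi> v = tadd (\<phi> v') (\<phi> (\<lambda>x. v n * dl n x))"
    using \<open>v = _\<close> by simp
  also have "\<phi> (\<lambda>x. v n * dl n x) = tsmult (v n) (e n)"
    using phi_smul[OF kpow_dl] Suc.prems(1) e_def' by simp
  finally have ev: "\<phi> v l = \<phi> v' l + v n \<cdot>\<^sub>m e n l" by (simp add: tadd_def tsmult_def)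
  have IH: "\<phi> v' l = 0\<^sub>m (D l) (D l)"
    using Suc.IH[of v'] Suc.prems unfolding v'_def by auto
  have "v n \<cdot>\<^sub>m e n l = 0\<^sub>m (D l) (D l)"
  proof (cases "v n = 0")
    case True then show ?thesis using e_carrier[of n l] Suc.prems(1) smult_zero_left_mat by simp
  next
    case False then show ?thesis using Suc.prems(3) by auto
  qed
  then show ?case using ev IH by simp
qed

lemma sum_single: assumes "k < r" "\<forall>q<r. q \<noteq> k \<longrightarrow> e q l = 0\<^sub>m (D l) (D l)"
  shows "e k l = 1\<^sub>m (D l)"
proof -
  define v where "v = (\<lambda>x. if x < r \<and> x \<noteq> k then 1 else (0::'a))"
  have vk: "v \<in> kpow r" unfolding v_def kpow_def by auto
  have "kunit r = (\<lambda>x. v x + dl k x)" using assms(1) unfolding v_def dl_def kunit_def by auto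
  then have "tone d m = tadd (\<phi> v) (e k)" using phi_one phi_add[OF vk kpow_dl[OF assms(1)]] e_def'
    by simp
  then have "1\<^sub>m (D l) = \<phi> v l + e k l" by (metis tone_def ocomp_DD tadd_def)
  moreover have "\<phi> v l = 0\<^sub>m (D l) (D l)"
    by (rule Zlemma[of r]) (use assms(2) in \<open>auto simp: v_def\<close>)
  ultimately show ?thesis using e_carrier[OF assms(1)] by simp
qed

lemma sum_pair: assumes "k < r" "q < r" "k \<noteq> q"
  "\<forall>p<r. p \<noteq> k \<and> p \<noteq> q \<longrightarrow> e p l = 0\<^sub>m (D l) (D l)"
  shows "e k l + e q l = 1\<^sub>m (D l)"
proof -
  define v where "v = (\<lambda>x. if x < r \<and> x \<noteq> k \<and> x \<noteq> q then 1 else (0::'a))"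
  have vk: "v \<in> kpow r" unfolding v_def kpow_def by auto
  have "kunit r = (\<lambda>x. v x + (\<lambda>x. dl k x + dl q x) x)"
    using assms(1-3) unfolding v_def dl_def kunit_def by auto
  then have "tone d m = tadd (\<phi> v) (tadd (e k) (e q))"
    using phi_one phi_add[OF vk kpow_add[OF kpow_dl[OF assms(1)] kpow_dl[OF assms(2)]]]
      phi_add[OF kpow_dl[OF assms(1)] kpow_dl[OF assms(2)]] e_def'
    by simp
  then have "1\<^sub>m (D l) = \<phi> v l + (e k l + e q l)" by (metis tone_def ocomp_DD tadd_def)
  moreover have "\<phi> v l = 0\<^sub>m (D l) (D l)"
    by (rule Zlemma[of r]) (use assms(4) in \<open>auto simp: v_def\<close>)
  ultimately show ?thesis using e_carrier[OF assms(1)] e_carrier[OF assms(2)] by simp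
qed


abbreviation "M k \<equiv> tens_mod d m \<phi> k"

lemmas tmul_assoc' = tmul_assoc[where d=d and m=m]
lemmas tmul_tadd_left' = tmul_tadd_left[where d=d and m=m]
lemmas tmul_tadd_right' = tmul_tadd_right[where d=d and m=m]
lemmas tmul_tsmult_left' = tmul_tsmult_left[where d=d and m=m]
lemmas tmul_tsmult_right' = tmul_tsmult_right[where d=d and m=m]
lemmas tmul_tzero_left' = tmul_tzero_left[where d=d and m=m]
lemmas tmul_tzero_right' = tmul_tzero_right[where d=d and m=m]
lemmas tadd_tzero' = tadd_tzero[where d=d and m=m]
lemmas tzero_tadd' = tzero_tadd[where d=d and m=m]
lemmas tsmult_zero' = tsmult_zero[where d=d and m=m]

definition eigen where "eigen y \<longleftrightarrow> (\<exists>q<r. tmul (e q) y = y)"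

lemma M_St: "k < r \<Longrightarrow> x \<in> M k \<Longrightarrow> x \<in> Stilde d m"
  unfolding tens_mod_def using e_St by auto

lemma M_zero: assumes "k < r" shows "tzero d m \<in> M k"
proof -
  have eq: "tmul (tzero d m) (e k) = tzero d m" by (rule tmul_tzero_left[OF e_St[OF assms]])
  show ?thesis unfolding tens_mod_def using eq[symmetric] tzero_St by blast
qed

lemma M_add: assumes "k < r" "x \<in> M k" "y \<in> M k" shows "tadd x y \<in> M k"
proof -
  obtain a b where ab: "a \<in> Stilde d m" "b \<in> Stilde d m" "x = tmul a (e k)" "y = tmul b (e k)"
    using assms unfolding tens_mod_def by blast
  then have "tadd x y = tmul (tadd a b) (e k)" using tmul_tadd_left[OF ab(1,2) e_St[OF assms(1)]] by simp
  then show ?thesis unfolding tens_mod_def using ab by auto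
qed

lemma M_smult: assumes "k < r" "x \<in> M k" shows "tsmult c x \<in> M k"
proof -
  obtain a where ab: "a \<in> Stilde d m" "x = tmul a (e k)"
    using assms unfolding tens_mod_def by blast
  then have "tsmult c x = tmul (tsmult c a) (e k)" using tmul_tsmult_left[OF ab(1) e_St[OF assms(1)]] by simp
  then show ?thesis unfolding tens_mod_def using ab by auto
qed

lemma eigen_zero: "0 < r \<Longrightarrow> eigen (tzero d m)"
  unfolding eigen_def using tmul_tzero_right'[OF e_St] by blast

lemma span3_sub: assumes k: "k < r" and y: "y1 \<in> M k" "y2 \<in> M k" "y3 \<in> M k"
  and ei: "eigen y1" "eigen y2" "eigen y3"
  shows "is_submodule d m (Ssub r \<phi>) (M k) (span3 y1 y2 y3)"
proof -
  have St: "y1 \<in> Stilde d m" "y2 \<in> Stilde d m" "y3 \<in> Stilde d m" using y M_St k by auto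
  obtain q1 q2 q3 where q: "q1 < r" "q2 < r" "q3 < r" "tmul (e q1) y1 = y1" "tmul (e q2) y2 = y2"
    "tmul (e q3) y3 = y3" using ei unfolding eigen_def by blast
  have sub: "span3 y1 y2 y3 \<subseteq> M k"
    unfolding span3_def using M_add M_smult k y by auto
  have z: "tzero d m \<in> span3 y1 y2 y3"
  proof -
    have "tadd (tadd (tsmult 0 y1) (tsmult 0 y2)) (tsmult 0 y3) = tzero d m"
      using St by (simp add: tsmult_zero' tadd_tzero')
    then show ?thesis unfolding span3_def by (metis (mono_tags, lifting) mem_Collect_eq)
  qed
  have ad: "\<forall>x\<in>span3 y1 y2 y3. \<forall>y\<in>span3 y1 y2 y3. tadd x y \<in> span3 y1 y2 y3"
    unfolding span3_def using tadd_lin3[OF St] by blast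
  have mu: "\<forall>s\<in>Ssub r \<phi>. \<forall>x\<in>span3 y1 y2 y3. tmul s x \<in> span3 y1 y2 y3"
  proof (intro ballI)
    fix s x assume s: "s \<in> Ssub r \<phi>" and x: "x \<in> span3 y1 y2 y3"
    obtain v where v: "v \<in> kpow r" "s = \<phi> v" using s unfolding Ssub_def by blast
    obtain a b c where x': "x = tadd (tadd (tsmult a y1) (tsmult b y2)) (tsmult c y3)"
      using x unfolding span3_def by blast
    have sS: "s \<in> Stilde d m" using v phi_St by simp
    have "tmul s x = tadd (tadd (tsmult a (tmul s y1)) (tsmult b (tmul s y2))) (tsmult c (tmul s y3))"
      unfolding x' using St sS by (simp add: tmul_tadd_right' tmul_tsmult_right')
    also have "\<dots> = tadd (tadd (tsmult (a * v q1) y1) (tsmult (b * v q2) y2)) (tsmult (c * v q3) y3)"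
      using eig_act[OF v(1) q(1) St(1) q(4)] eig_act[OF v(1) q(2) St(2) q(5)]
        eig_act[OF v(1) q(3) St(3) q(6)] v(2) by (simp add: tsmult_tsmult)
    finally show "tmul s x \<in> span3 y1 y2 y3" unfolding span3_def by blast
  qed
  show ?thesis unfolding is_submodule_def using sub z ad mu by blast
qed

lemma LL: assumes k: "k < r" and y: "y1 \<in> M k" "y2 \<in> M k" "y3 \<in> M k"
  and ei: "eigen y1" "eigen y2" "eigen y3"
  and i1: "y1 \<noteq> tzero d m" and i2: "\<forall>c. y2 \<noteq> tsmult c y1"
  and i3: "\<forall>a b. y3 \<noteq> tadd (tsmult a y1) (tsmult b y2)"
  shows "\<not> length_le d m (Ssub r \<phi>) (M k) 2"
proof
  assume len: "length_le d m (Ssub r \<phi>) (M k) 2"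
  have St: "y1 \<in> Stilde d m" "y2 \<in> Stilde d m" "y3 \<in> Stilde d m" using y M_St k by auto
  have tz: "tzero d m \<in> M k" "eigen (tzero d m)" using M_zero eigen_zero k by auto
  define c where "c = (\<lambda>i::nat. if i = 0 then span3 (tzero d m) (tzero d m) (tzero d m)
     else if i = 1 then span3 y1 (tzero d m) (tzero d m) else if i = 2 then span3 y1 y2 (tzero d m)
     else span3 y1 y2 y3)"
  have c0: "c 0 = {tzero d m}"
    unfolding c_def span3_def by (simp add: tsmult_tzero tadd_tzero')
  have c1: "c 1 = {tsmult a y1 | a. True}"
    unfolding c_def span3_def using St by (simp add: tsmult_tzero tadd_tzero')
  have c2: "c 2 = {tadd (tsmult a y1) (tsmult b y2) | a b. True}"
    unfolding c_def span3_def using St by (simp add: tsmult_tzero tadd_tzero')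
  have c3: "c 3 = span3 y1 y2 y3" unfolding c_def by simp
  have subm: "\<forall>i\<le>3. is_submodule d m (Ssub r \<phi>) (M k) (c i)"
  proof (intro allI impI)
    fix i :: nat assume "i \<le> 3"
    then show "is_submodule d m (Ssub r \<phi>) (M k) (c i)"
      unfolding c_def using span3_sub[OF k] y ei tz by auto
  qed
  have s01: "c 0 \<subset> c 1"
  proof -
    have "tzero d m = tsmult 0 y1" using tsmult_zero'[OF St(1)] by simp
    moreover have "y1 \<in> c 1" using c1 tsmult_one by (metis (mono_tags, lifting) mem_Collect_eq)
    ultimately show ?thesis using c0 c1 i1 by auto
  qed
  have s12: "c 1 \<subset> c 2"
  proof -
    have "c 1 \<subseteq> c 2"
    proof
      fix x assume "x \<in> c 1"
      then obtain a where x: "x = tsmult a y1" using c1 by blast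
      have "x = tadd (tsmult a y1) (tsmult 0 y2)" using St x by (simp add: tsmult_zero' tadd_tzero')
      then show "x \<in> c 2" unfolding c2 by blast
    qed
    moreover have "y2 = tadd (tsmult 0 y1) (tsmult 1 y2)"
      using St by (simp add: tsmult_zero' tzero_tadd' tsmult_one)
    then have "y2 \<in> c 2" unfolding c2 by blast
    moreover have "y2 \<notin> c 1" using i2 unfolding c1 by blast
    ultimately show ?thesis by blast
  qed
  have s23: "c 2 \<subset> c 3"
  proof -
    have "c 2 \<subseteq> c 3"
    proof
      fix x assume "x \<in> c 2"
      then obtain a b where x: "x = tadd (tsmult a y1) (tsmult b y2)" using c2 by blast
      have "x = tadd (tadd (tsmult a y1) (tsmult b y2)) (tsmult 0 y3)"
        using St x by (simp add: tsmult_zero' tadd_tzero')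
      then show "x \<in> c 3" unfolding c3 span3_def by blast
    qed
    moreover have "y3 = tadd (tadd (tsmult 0 y1) (tsmult 0 y2)) (tsmult 1 y3)"
      using St by (simp add: tsmult_zero' tzero_tadd' tsmult_one)
    then have "y3 \<in> c 3" unfolding c3 span3_def by blast
    moreover have "y3 \<notin> c 2" using i3 unfolding c2 by blast
    ultimately show ?thesis by blast
  qed
  have "\<forall>i<3. c i \<subset> c (Suc i)"
  proof (intro allI impI)
    fix i :: nat assume "i < 3"
    then have "i = 0 \<or> i = 1 \<or> i = 2" by auto
    then show "c i \<subset> c (Suc i)" using s01 s12 s23 by (auto simp: numeral_2_eq_2 numeral_3_eq_3)
  qed
  then have "(3::nat) \<le> 2" using len subm unfolding length_le_def by blast
  then show False by simp
qed


definition sgl where "sgl l A = (\<lambda>x. if x = l then A else zcomp d m x)"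

lemma sgl_St: "A \<in> carrier_mat (D l) (D l) \<Longrightarrow> sgl l A \<in> Stilde d m"
  by (rule StildeI) (auto simp: sgl_def zcomp_DD)

lemma sgl_at: "sgl l A l = A" by (simp add: sgl_def)
lemma sgl_off: "x \<noteq> l \<Longrightarrow> sgl l A x = 0\<^sub>m (D x) (D x)" by (simp add: sgl_def zcomp_DD)

lemma sgl_M: assumes "k < r" "X \<in> carrier_mat (D l) (D l)" shows "sgl l (X * e k l) \<in> M k"
proof -
  have "tmul (sgl l X) (e k) = sgl l (X * e k l)"
  proof (rule ext)
    fix x show "tmul (sgl l X) (e k) x = sgl l (X * e k l) x"
      using e_carrier[OF assms(1), of x] by (cases "x = l") (auto simp: tmul_def sgl_at sgl_off)
  qed
  then show ?thesis unfolding tens_mod_def using sgl_St[OF assms(2)] by (metis (mono_tags, lifting) mem_Collect_eq)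
qed

lemma sgl_eig: assumes "q < r" "e q l * A = A" shows "eigen (sgl l A)"
proof -
  have "tmul (e q) (sgl l A) = sgl l A"
  proof (rule ext)
    fix x show "tmul (e q) (sgl l A) x = sgl l A x"
      using e_carrier[OF assms(1), of x] assms(2) by (cases "x = l") (auto simp: tmul_def sgl_at sgl_off)
  qed
  then show ?thesis unfolding eigen_def using assms(1) by blast
qed

lemma sgl_nz: assumes "A \<noteq> 0\<^sub>m (D l) (D l)" shows "sgl l A \<noteq> tzero d m"
proof
  assume "sgl l A = tzero d m"
  then have "sgl l A l = tzero d m l" by simp
  then show False using assms by (simp add: sgl_at tzero_app)
qed

lemma fun_at: "f = g \<Longrightarrow> f x = g x" by simp

lemma LLc: assumes k: "k < r" and X: "X1 \<in> carrier_mat (D l) (D l)" "X2 \<in> carrier_mat (D l) (D l)"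
    "X3 \<in> carrier_mat (D l) (D l)"
  and Y: "Y1 = X1 * e k l" "Y2 = X2 * e k l" "Y3 = X3 * e k l"
  and q: "q1 < r" "q2 < r" "q3 < r" "e q1 l * Y1 = Y1" "e q2 l * Y2 = Y2" "e q3 l * Y3 = Y3"
  and i1: "Y1 \<noteq> 0\<^sub>m (D l) (D l)" and i2: "\<forall>c. Y2 \<noteq> c \<cdot>\<^sub>m Y1"
  and i3: "\<forall>a b. Y3 \<noteq> a \<cdot>\<^sub>m Y1 + b \<cdot>\<^sub>m Y2"
  shows "\<not> length_le d m (Ssub r \<phi>) (M k) 2"
proof (rule LL[OF k])
  show "sgl l Y1 \<in> M k" "sgl l Y2 \<in> M k" "sgl l Y3 \<in> M k" using sgl_M[OF k] X Y by auto
  show "eigen (sgl l Y1)" "eigen (sgl l Y2)" "eigen (sgl l Y3)" using sgl_eig q by auto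
  show "sgl l Y1 \<noteq> tzero d m"
    using sgl_nz i1 by blast
  show "\<forall>c. sgl l Y2 \<noteq> tsmult c (sgl l Y1)"
  proof (intro allI notI)
    fix c assume "sgl l Y2 = tsmult c (sgl l Y1)"
    then have "sgl l Y2 l = tsmult c (sgl l Y1) l" by simp
    then show False using i2 by (simp add: sgl_at tsmult_def)
  qed
  show "\<forall>a b. sgl l Y3 \<noteq> tadd (tsmult a (sgl l Y1)) (tsmult b (sgl l Y2))"
  proof (intro allI notI)
    fix a b assume "sgl l Y3 = tadd (tsmult a (sgl l Y1)) (tsmult b (sgl l Y2))"
    then have "sgl l Y3 l = tadd (tsmult a (sgl l Y1)) (tsmult b (sgl l Y2)) l" by simp
    then show False using i3 by (simp add: sgl_at tsmult_def tadd_def)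
  qed
qed

lemma nzc: assumes "k < r" "e k l \<noteq> zcomp d m l" shows "l < m"
proof (rule ccontr)
  assume "\<not> l < m"
  then have "D l = 0" by (simp add: DD_def)
  then have "e k l = 0\<^sub>m 0 0" using e_carrier[OF assms(1), of l] carrier00 by simp
  then show False using assms(2) \<open>D l = 0\<close> by (simp add: zcomp_DD)
qed

lemma LL2: assumes k: "k < r" and X: "X1 \<in> carrier_mat (D l) (D l)" "X2 \<in> carrier_mat (D l) (D l)"
  and Y: "Y1 = X1 * e k l" "Y2 = X2 * e k l"
  and q: "q1 < r" "q2 < r" "e q1 l * Y1 = Y1" "e q2 l * Y2 = Y2"
  and i1: "Y1 \<noteq> 0\<^sub>m (D l) (D l)" and i2: "\<forall>c. Y2 \<noteq> c \<cdot>\<^sub>m Y1"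
  and l': "l' \<noteq> l" "e k l' \<noteq> zcomp d m l'"
  shows "\<not> length_le d m (Ssub r \<phi>) (M k) 2"
proof (rule LL[OF k])
  have c': "e k l' \<in> carrier_mat (D l') (D l')" using e_carrier[OF k] .
  show "sgl l Y1 \<in> M k" "sgl l Y2 \<in> M k" using sgl_M[OF k] X Y by auto
  have "sgl l' (1\<^sub>m (D l') * e k l') \<in> M k" by (rule sgl_M[OF k]) simp
  then show "sgl l' (e k l') \<in> M k" using c' by simp
  show "eigen (sgl l Y1)" "eigen (sgl l Y2)" using sgl_eig q by auto
  show "eigen (sgl l' (e k l'))" using sgl_eig[OF k] e_idem_l[OF k] by blast
  show "sgl l Y1 \<noteq> tzero d m"
    using sgl_nz i1 by blast
  show "\<forall>c. sgl l Y2 \<noteq> tsmult c (sgl l Y1)"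
  proof (intro allI notI)
    fix c assume "sgl l Y2 = tsmult c (sgl l Y1)"
    then have "sgl l Y2 l = tsmult c (sgl l Y1) l" by simp
    then show False using i2 by (simp add: sgl_at tsmult_def)
  qed
  show "\<forall>a b. sgl l' (e k l') \<noteq> tadd (tsmult a (sgl l Y1)) (tsmult b (sgl l Y2))"
  proof (intro allI notI)
    fix a b assume "sgl l' (e k l') = tadd (tsmult a (sgl l Y1)) (tsmult b (sgl l Y2))"
    then have "sgl l' (e k l') l' = tadd (tsmult a (sgl l Y1)) (tsmult b (sgl l Y2)) l'" by simp
    then show False using l' by (simp add: sgl_at sgl_off tsmult_def tadd_def zcomp_DD)
  qed
qed

lemma LL3: assumes k: "k < r" and l: "l1 \<noteq> l2" "l1 \<noteq> l3" "l2 \<noteq> l3"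
  "e k l1 \<noteq> zcomp d m l1" "e k l2 \<noteq> zcomp d m l2" "e k l3 \<noteq> zcomp d m l3"
  shows "\<not> length_le d m (Ssub r \<phi>) (M k) 2"
proof (rule LL[OF k])
  have inM: "sgl l (e k l) \<in> M k" for l
  proof -
    have "sgl l (1\<^sub>m (D l) * e k l) \<in> M k" by (rule sgl_M[OF k]) simp
    then show ?thesis using e_carrier[OF k, of l] by simp
  qed
  show "sgl l1 (e k l1) \<in> M k" "sgl l2 (e k l2) \<in> M k" "sgl l3 (e k l3) \<in> M k" using inM by auto
  show "eigen (sgl l1 (e k l1))" "eigen (sgl l2 (e k l2))" "eigen (sgl l3 (e k l3))"
    using sgl_eig[OF k] e_idem_l[OF k] by blast+
  show "sgl l1 (e k l1) \<noteq> tzero d m"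
    using sgl_nz l by (simp add: zcomp_DD)
  show "\<forall>c. sgl l2 (e k l2) \<noteq> tsmult c (sgl l1 (e k l1))"
  proof (intro allI notI)
    fix c assume "sgl l2 (e k l2) = tsmult c (sgl l1 (e k l1))"
    then have "sgl l2 (e k l2) l2 = tsmult c (sgl l1 (e k l1)) l2" by simp
    then show False using l by (simp add: sgl_at sgl_off tsmult_def zcomp_DD)
  qed
  show "\<forall>a b. sgl l3 (e k l3) \<noteq> tadd (tsmult a (sgl l1 (e k l1))) (tsmult b (sgl l2 (e k l2)))"
  proof (intro allI notI)
    fix a b assume "sgl l3 (e k l3) = tadd (tsmult a (sgl l1 (e k l1))) (tsmult b (sgl l2 (e k l2)))"
    then have "sgl l3 (e k l3) l3 = tadd (tsmult a (sgl l1 (e k l1))) (tsmult b (sgl l2 (e k l2))) l3" by simp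
    then show False using l by (simp add: sgl_at sgl_off tsmult_def tadd_def zcomp_DD)
  qed
qed

end



definition Um :: "nat \<Rightarrow> nat \<Rightarrow> nat \<Rightarrow> 'a::field mat" where
  "Um n a b = mat n n (\<lambda>(i,j). if i = a \<and> j = b then 1 else 0)"

lemma Um_carrier[simp]: "Um n a b \<in> carrier_mat n n" by (simp add: Um_def)
lemma Um_dim[simp]: "dim_row (Um n a b) = n" "dim_col (Um n a b) = n" by (auto simp: Um_def)
lemma Um_index: "i < n \<Longrightarrow> j < n \<Longrightarrow> Um n a b $$ (i,j) = (if i = a \<and> j = b then 1 else 0)"
  by (simp add: Um_def)

lemma mult_entry: assumes "A \<in> carrier_mat n n" "B \<in> carrier_mat n n" "i < n" "j < n"
  shows "(A * B) $$ (i,j) = (\<Sum>t<n. A $$ (i,t) * B $$ (t,j))"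
  using assms by (simp add: scalar_prod_def atLeast0LessThan row_def col_def)

lemma Um_left: assumes "A \<in> carrier_mat n n" "i < n" "j < n" "b < n"
  shows "(Um n a b * A) $$ (i,j) = (if i = a then A $$ (b,j) else 0)"
proof -
  have "(Um n a b * A) $$ (i,j) = (\<Sum>t<n. Um n a b $$ (i,t) * A $$ (t,j))"
    by (rule mult_entry) (use assms in auto)
  also have "\<dots> = (\<Sum>t<n. if t = b then (if i = a then A $$ (b,j) else 0) else 0)"
    by (rule sum.cong) (auto simp: Um_index assms)
  also have "\<dots> = (if i = a then A $$ (b,j) else 0)" using assms(4) by simp
  finally show ?thesis .
qed

lemma Um_right: assumes "A \<in> carrier_mat n n" "i < n" "j < n" "a < n"
  shows "(A * Um n a b) $$ (i,j) = (if j = b then A $$ (i,a) else 0)"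
proof -
  have "(A * Um n a b) $$ (i,j) = (\<Sum>t<n. A $$ (i,t) * Um n a b $$ (t,j))"
    by (rule mult_entry) (use assms in auto)
  also have "\<dots> = (\<Sum>t<n. if t = a then (if j = b then A $$ (i,a) else 0) else 0)"
    by (rule sum.cong) (auto simp: Um_index assms)
  also have "\<dots> = (if j = b then A $$ (i,a) else 0)" using assms(4) by simp
  finally show ?thesis .
qed

lemma Um_mid: assumes "A \<in> carrier_mat n n" "B \<in> carrier_mat n n" "i < n" "j < n" "b < n" "c < n"
  shows "(A * Um n b c * B) $$ (i,j) = A $$ (i,b) * B $$ (c,j)"
proof -
  have "(A * Um n b c * B) $$ (i,j) = (\<Sum>t<n. (A * Um n b c) $$ (i,t) * B $$ (t,j))"
    by (rule mult_entry) (use assms in auto)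
  also have "\<dots> = (\<Sum>t<n. if t = c then A $$ (i,b) * B $$ (c,j) else 0)"
    by (rule sum.cong) (auto simp: Um_right assms)
  also have "\<dots> = A $$ (i,b) * B $$ (c,j)" using assms(6) by simp
  finally show ?thesis .
qed

lemma Um_sand: assumes "A \<in> carrier_mat n n" "a < n" "b < n" "c < n" "e < n"
  shows "Um n a b * A * Um n c e = A $$ (b,c) \<cdot>\<^sub>m Um n a e"
proof (rule eq_matI)
  fix i j assume ij: "i < dim_row (A $$ (b,c) \<cdot>\<^sub>m Um n a e)" "j < dim_col (A $$ (b,c) \<cdot>\<^sub>m Um n a e)"
  then have ij': "i < n" "j < n" by (auto simp: Um_def)
  have "(Um n a b * A * Um n c e) $$ (i,j) = (if j = e then (Um n a b * A) $$ (i,c) else 0)"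
  proof (rule Um_right)
    show "Um n a b * A \<in> carrier_mat n n" using Um_carrier assms(1) by (rule mult_carrier_mat)
  qed (use assms ij' in auto)
  also have "\<dots> = (if j = e then (if i = a then A $$ (b,c) else 0) else 0)"
    using Um_left[OF assms(1) ij'(1) assms(4) assms(3)] by simp
  finally show "(Um n a b * A * Um n c e) $$ (i,j) = (A $$ (b,c) \<cdot>\<^sub>m Um n a e) $$ (i,j)"
    using ij' by (auto simp: Um_index)
qed (use assms in auto)

lemma det_contra:
  fixes u w \<alpha> \<beta> :: "nat \<Rightarrow> 'a::field"
  assumes h: "\<forall>x<3. \<forall>a<3. (if x = a then 1 else 0) = \<alpha> a * u x + \<beta> a * w x"
  shows False
proof -
  define A :: "'a mat" where "A = mat 3 3 (\<lambda>(x,j). if j = 0 then u x else if j = 1 then w x else 0)"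
  define cv where "cv = (\<lambda>j::nat. vec 3 (\<lambda>a. if j = 0 then \<alpha> a else \<beta> a) :: 'a vec)"
  define B :: "'a mat" where "B = mat\<^sub>r 3 3 (\<lambda>j. if j = 2 then 0\<^sub>v 3 else cv j)"
  have A: "A \<in> carrier_mat 3 3" and B: "B \<in> carrier_mat 3 3" by (auto simp: A_def B_def)
  have "det B = 0" unfolding B_def by (rule det_row_0) (auto simp: cv_def)
  have Bij: "B $$ (j,a) = (if j = 0 then \<alpha> a else if j = 1 then \<beta> a else 0)" if "j < 3" "a < 3" for j a
    using that by (auto simp: B_def cv_def)
  have "A * B = 1\<^sub>m 3"
  proof (rule eq_matI)
    fix x a assume "x < dim_row (1\<^sub>m 3 :: 'a mat)" "a < dim_col (1\<^sub>m 3 :: 'a mat)"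
    then have xa: "x < 3" "a < 3" by auto
    have "(A * B) $$ (x,a) = (\<Sum>t<3. A $$ (x,t) * B $$ (t,a))"
      by (rule mult_entry) (use A B xa in auto)
    also have "\<dots> = u x * \<alpha> a + w x * \<beta> a"
      using xa by (simp add: numeral_3_eq_3 A_def Bij)
    also have "\<dots> = (if x = a then 1 else 0)" using h xa by (simp add: ac_simps)
    finally show "(A * B) $$ (x,a) = 1\<^sub>m 3 $$ (x,a)" using xa by simp
  qed (use A B in auto)
  then have "det (A * B) = 1" by simp
  moreover have "det (A * B) = det A * det B" by (rule det_mult[OF A B])
  ultimately show False using \<open>det B = 0\<close> by simp
qed


lemma mc: "A \<in> carrier_mat n n \<Longrightarrow> B \<in> carrier_mat n n \<Longrightarrow> A * B \<in> carrier_mat n n"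
  by (rule mult_carrier_mat)

lemma idem_left: fixes G :: "'a::field mat"
  assumes "G \<in> carrier_mat n n" "X \<in> carrier_mat n n" "G * G = G"
  shows "G * (G * X) = G * X"
  using assoc_mult_mat[OF assms(1) assms(1) assms(2)] assms(3) by simp

lemma orth_left: fixes G :: "'a::field mat" assumes "G \<in> carrier_mat n n" "H \<in> carrier_mat n n" "X \<in> carrier_mat n n"
  "G * H = 0\<^sub>m n n"
  shows "G * (H * X) = 0\<^sub>m n n"
  using assoc_mult_mat[OF assms(1) assms(2) assms(3)] assms by simp

lemma lin_mult: fixes G :: "'a::field mat"
  assumes "G \<in> carrier_mat n n" "Y1 \<in> carrier_mat n n" "Y2 \<in> carrier_mat n n"
  shows "G * (a \<cdot>\<^sub>m Y1 + b \<cdot>\<^sub>m Y2) = a \<cdot>\<^sub>m (G * Y1) + b \<cdot>\<^sub>m (G * Y2)"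
proof -
  have "G * (a \<cdot>\<^sub>m Y1 + b \<cdot>\<^sub>m Y2) = G * (a \<cdot>\<^sub>m Y1) + G * (b \<cdot>\<^sub>m Y2)"
    by (rule mult_add_distrib_mat) (use assms in auto)
  also have "\<dots> = a \<cdot>\<^sub>m (G * Y1) + b \<cdot>\<^sub>m (G * Y2)"
    using mult_smult_distrib[OF assms(1) assms(2)] mult_smult_distrib[OF assms(1) assms(3)] by simp
  finally show ?thesis .
qed

lemma mat_nz_entry: assumes "A \<in> carrier_mat n n" "A \<noteq> 0\<^sub>m n n"
  shows "\<exists>i j. i < n \<and> j < n \<and> A $$ (i,j) \<noteq> 0"
proof (rule ccontr)
  assume "\<not> ?thesis"
  then have "A = 0\<^sub>m n n" using assms(1) by (intro eq_matI) auto
  then show False using assms(2) by simp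
qed

context LS begin

lemma no_I2: assumes k: "k < r" and len: "length_le d m (Ssub r \<phi>) (M k) 2"
  and I: "e k l = 1\<^sub>m (D l)" and two: "2 \<le> D l"
  shows False
proof -
  let ?n = "D l"
  have U: "Um ?n a b * e k l = (Um ?n a b :: 'a mat)" "e k l * Um ?n a b = (Um ?n a b :: 'a mat)" for a b
    using I by simp_all
  have n01: "0 < ?n" "1 < ?n" using two by auto
  have "\<not> length_le d m (Ssub r \<phi>) (M k) 2"
  proof (rule LLc[OF k Um_carrier Um_carrier Um_carrier U(1)[symmetric] U(1)[symmetric]
        U(1)[symmetric] k k k U(2) U(2) U(2)])
    show "(Um ?n 0 0 :: 'a mat) \<noteq> 0\<^sub>m ?n ?n"
    proof
      assume "(Um ?n 0 0 :: 'a mat) = 0\<^sub>m ?n ?n"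
      then have "(Um ?n 0 0 :: 'a mat) $$ (0,0) = 0\<^sub>m ?n ?n $$ (0,0)" by simp
      then show False using n01 by (simp add: Um_index)
    qed
    show "\<forall>c. (Um ?n 0 1 :: 'a mat) \<noteq> c \<cdot>\<^sub>m Um ?n 0 0"
    proof (intro allI notI)
      fix c assume "(Um ?n 0 1 :: 'a mat) = c \<cdot>\<^sub>m Um ?n 0 0"
      then have "(Um ?n 0 1 :: 'a mat) $$ (0,1) = (c \<cdot>\<^sub>m Um ?n 0 0) $$ (0,1)" by simp
      then show False using n01 by (simp add: Um_index)
    qed
    show "\<forall>a b. (Um ?n 1 1 :: 'a mat) \<noteq> a \<cdot>\<^sub>m Um ?n 0 0 + b \<cdot>\<^sub>m Um ?n 0 1"
    proof (intro allI notI)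
      fix a b assume "(Um ?n 1 1 :: 'a mat) = a \<cdot>\<^sub>m Um ?n 0 0 + b \<cdot>\<^sub>m Um ?n 0 1"
      then have "(Um ?n 1 1 :: 'a mat) $$ (1,1) = (a \<cdot>\<^sub>m Um ?n 0 0 + b \<cdot>\<^sub>m Um ?n 0 1) $$ (1,1)" by simp
      then show False using n01 by (simp add: Um_index)
    qed
  qed
  then show False using len by simp
qed

lemma exists_other: assumes k: "k < r" and ne: "e k l \<noteq> 1\<^sub>m (D l)"
  shows "\<exists>q<r. q \<noteq> k \<and> e q l \<noteq> 0\<^sub>m (D l) (D l)"
  using sum_single[OF k] ne by blast

lemma nzX: assumes F: "F \<in> carrier_mat n n" "F \<noteq> 0\<^sub>m n n" and E: "E \<in> carrier_mat n n" "E \<noteq> 0\<^sub>m n n"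
  shows "\<exists>b c. b < n \<and> c < n \<and> F * (Um n b c * E) \<noteq> 0\<^sub>m n n"
proof -
  obtain a b where ab: "a < n" "b < n" "F $$ (a,b) \<noteq> 0" using mat_nz_entry[OF F] by blast
  obtain c x where cx: "c < n" "x < n" "E $$ (c,x) \<noteq> 0" using mat_nz_entry[OF E] by blast
  have "(F * Um n b c * E) $$ (a,x) = F $$ (a,b) * E $$ (c,x)"
    by (rule Um_mid) (use F E ab cx in auto)
  moreover have "F * Um n b c * E = F * (Um n b c * E)" by (rule assoc_mult_mat[OF F(1) Um_carrier E(1)])
  ultimately have "(F * (Um n b c * E)) $$ (a,x) \<noteq> 0" using ab cx by simp
  then have "F * (Um n b c * E) \<noteq> 0\<^sub>m n n" using ab cx by auto
  then show ?thesis using ab cx by blast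
qed

lemma pair: assumes k: "k < r" and nz: "e k l \<noteq> 0\<^sub>m (D l) (D l)"
  and cond: "e k l \<noteq> 1\<^sub>m (D l) \<or> 2 \<le> D l"
  shows "\<exists>X1 X2 q1 q2. X1 \<in> carrier_mat (D l) (D l) \<and> X2 \<in> carrier_mat (D l) (D l) \<and>
     q1 < r \<and> q2 < r \<and> e q1 l * (X1 * e k l) = X1 * e k l \<and> e q2 l * (X2 * e k l) = X2 * e k l \<and>
     X1 * e k l \<noteq> 0\<^sub>m (D l) (D l) \<and> (\<forall>c. X2 * e k l \<noteq> c \<cdot>\<^sub>m (X1 * e k l))"
proof (cases "e k l = 1\<^sub>m (D l)")
  case True
  let ?n = "D l"
  have two: "2 \<le> ?n" using cond True by simp
  have U: "Um ?n a b * e k l = (Um ?n a b :: 'a mat)" "e k l * Um ?n a b = (Um ?n a b :: 'a mat)" for a b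
    using True by simp_all
  have n01: "0 < ?n" "1 < ?n" using two by auto
  have "(Um ?n 0 0 :: 'a mat) \<noteq> 0\<^sub>m ?n ?n"
  proof
    assume "(Um ?n 0 0 :: 'a mat) = 0\<^sub>m ?n ?n"
    then have "(Um ?n 0 0 :: 'a mat) $$ (0,0) = 0\<^sub>m ?n ?n $$ (0,0)" by simp
    then show False using n01 by (simp add: Um_index)
  qed
  moreover have "\<forall>c. (Um ?n 0 1 :: 'a mat) \<noteq> c \<cdot>\<^sub>m Um ?n 0 0"
  proof (intro allI notI)
    fix c assume "(Um ?n 0 1 :: 'a mat) = c \<cdot>\<^sub>m Um ?n 0 0"
    then have "(Um ?n 0 1 :: 'a mat) $$ (0,1) = (c \<cdot>\<^sub>m Um ?n 0 0) $$ (0,1)" by simp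
    then show False using n01 by (simp add: Um_index)
  qed
  ultimately show ?thesis using U k by (intro exI[of _ "Um ?n 0 0"] exI[of _ "Um ?n 0 1"] exI[of _ k]) auto
next
  case False
  let ?n = "D l"
  let ?E = "e k l"
  obtain q where q: "q < r" "q \<noteq> k" "e q l \<noteq> 0\<^sub>m ?n ?n" using exists_other[OF k False] by blast
  let ?F = "e q l"
  have cE: "?E \<in> carrier_mat ?n ?n" and cF: "?F \<in> carrier_mat ?n ?n" using e_carrier k q by auto
  obtain b c where bc: "b < ?n" "c < ?n" "?F * (Um ?n b c * ?E) \<noteq> 0\<^sub>m ?n ?n"
    using nzX[OF cF q(3) cE nz] by blast
  have X2: "?F * Um ?n b c * ?E = ?F * (Um ?n b c * ?E)" by (rule assoc_mult_mat[OF cF Um_carrier cE])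
  have FE: "?F * ?E = 0\<^sub>m ?n ?n" using e_orth_l q k by simp
  have eig2: "?F * (?F * (Um ?n b c * ?E)) = ?F * (Um ?n b c * ?E)"
    by (rule idem_left[OF cF]) (use cE e_idem_l q in auto)
  have indep: "\<forall>c'. ?F * (Um ?n b c * ?E) \<noteq> c' \<cdot>\<^sub>m (1\<^sub>m ?n * ?E)"
  proof (intro allI notI)
    fix c' assume h: "?F * (Um ?n b c * ?E) = c' \<cdot>\<^sub>m (1\<^sub>m ?n * ?E)"
    then have "?F * (?F * (Um ?n b c * ?E)) = ?F * (c' \<cdot>\<^sub>m ?E)" using cE by simp
    also have "\<dots> = c' \<cdot>\<^sub>m (?F * ?E)" using cE cF by (simp add: mult_smult_distrib)
    finally have "?F * (Um ?n b c * ?E) = 0\<^sub>m ?n ?n" using eig2 FE by simp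
    then show False using bc by simp
  qed
  show ?thesis
    apply (rule exI[of _ "1\<^sub>m ?n"], rule exI[of _ "?F * Um ?n b c"], rule exI[of _ k], rule exI[of _ q])
    using cE cF X2 eig2 indep e_idem_l[OF k] nz q k by (auto intro: mc)
qed

lemma two_comp: assumes k: "k < r" and len: "length_le d m (Ssub r \<phi>) (M k) 2"
  and l: "e k l \<noteq> zcomp d m l" "2 \<le> D l" and l': "l' \<noteq> l" "e k l' \<noteq> zcomp d m l'"
  shows False
proof -
  have nz: "e k l \<noteq> 0\<^sub>m (D l) (D l)" using l by (simp add: zcomp_DD)
  obtain X1 X2 q1 q2 where X: "X1 \<in> carrier_mat (D l) (D l)" "X2 \<in> carrier_mat (D l) (D l)"
    "q1 < r" "q2 < r" "e q1 l * (X1 * e k l) = X1 * e k l" "e q2 l * (X2 * e k l) = X2 * e k l"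
    "X1 * e k l \<noteq> 0\<^sub>m (D l) (D l)" "\<forall>c. X2 * e k l \<noteq> c \<cdot>\<^sub>m (X1 * e k l)"
    using pair[OF k nz] l by blast
  have "\<not> length_le d m (Ssub r \<phi>) (M k) 2"
    by (rule LL2[OF k X(1,2) refl refl X(3,4,5,6,7,8) l'])
  then show False using len by simp
qed

end

lemma sand_eig: fixes G :: "'a::field mat"
  assumes "G \<in> carrier_mat n n" "U \<in> carrier_mat n n" "E \<in> carrier_mat n n" "G * G = G"
  shows "G * (G * U * E) = G * U * E"
proof -
  have "G * U * E = G * (U * E)" by (rule assoc_mult_mat[OF assms(1-3)])
  moreover have "G * (G * (U * E)) = G * (U * E)" by (rule idem_left) (use assms in \<open>auto intro: mc\<close>)
  ultimately show ?thesis by simp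
qed

lemma sand_orth: fixes G :: "'a::field mat"
  assumes "G \<in> carrier_mat n n" "H \<in> carrier_mat n n" "U \<in> carrier_mat n n" "E \<in> carrier_mat n n"
    "G * H = 0\<^sub>m n n"
  shows "G * (H * U * E) = 0\<^sub>m n n"
proof -
  have "H * U * E = H * (U * E)" by (rule assoc_mult_mat[OF assms(2-4)])
  moreover have "G * (H * (U * E)) = 0\<^sub>m n n" by (rule orth_left) (use assms in \<open>auto intro: mc\<close>)
  ultimately show ?thesis by simp
qed

lemma sand_entry: fixes G :: "'a::field mat"
  assumes "G \<in> carrier_mat n n" "E \<in> carrier_mat n n" "x < n" "j < n" "a < n" "c < n"
  shows "(G * Um n a c * E) $$ (x,j) = G $$ (x,a) * E $$ (c,j)"
  by (rule Um_mid) (use assms in auto)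

lemma sand_carrier: fixes G :: "'a::field mat"
  assumes "G \<in> carrier_mat n n" "E \<in> carrier_mat n n"
  shows "G * Um n a c * E \<in> carrier_mat n n" "G * Um n a c \<in> carrier_mat n n"
  using assms by (auto intro!: mc)

context LS begin

lemma three_others: assumes k: "k < r" and len: "length_le d m (Ssub r \<phi>) (M k) 2"
  and nz: "e k l \<noteq> 0\<^sub>m (D l) (D l)"
  and q: "q < r" "q \<noteq> k" "e q l \<noteq> 0\<^sub>m (D l) (D l)"
  and q': "q' < r" "q' \<noteq> k" "q' \<noteq> q" "e q' l \<noteq> 0\<^sub>m (D l) (D l)"
  shows False
proof -
  let ?n = "D l" let ?E = "e k l" let ?F = "e q l" let ?G = "e q' l"
  have cE: "?E \<in> carrier_mat ?n ?n" and cF: "?F \<in> carrier_mat ?n ?n" and cG: "?G \<in> carrier_mat ?n ?n"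
    using e_carrier k q q' by auto
  obtain b c where bc: "b < ?n" "c < ?n" "?F * (Um ?n b c * ?E) \<noteq> 0\<^sub>m ?n ?n"
    using nzX[OF cF q(3) cE nz] by blast
  obtain b' c' where bc': "b' < ?n" "c' < ?n" "?G * (Um ?n b' c' * ?E) \<noteq> 0\<^sub>m ?n ?n"
    using nzX[OF cG q'(4) cE nz] by blast
  have A2: "?F * Um ?n b c * ?E = ?F * (Um ?n b c * ?E)" by (rule assoc_mult_mat[OF cF Um_carrier cE])
  have A3: "?G * Um ?n b' c' * ?E = ?G * (Um ?n b' c' * ?E)" by (rule assoc_mult_mat[OF cG Um_carrier cE])
  let ?Y2 = "?F * Um ?n b c * ?E" let ?Y3 = "?G * Um ?n b' c' * ?E"
  have cY: "?Y2 \<in> carrier_mat ?n ?n" "?Y3 \<in> carrier_mat ?n ?n" using sand_carrier cE cF cG by auto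
  have e2: "?F * ?Y2 = ?Y2" by (rule sand_eig[OF cF Um_carrier cE e_idem_l[OF q(1)]])
  have e3: "?G * ?Y3 = ?Y3" by (rule sand_eig[OF cG Um_carrier cE e_idem_l[OF q'(1)]])
  have FE: "?F * ?E = 0\<^sub>m ?n ?n" using e_orth_l q k by simp
  have GE: "?G * ?E = 0\<^sub>m ?n ?n" using e_orth_l q' k by simp
  have GY2: "?G * ?Y2 = 0\<^sub>m ?n ?n" by (rule sand_orth[OF cG cF Um_carrier cE]) (use e_orth_l q q' in simp)
  have "\<not> length_le d m (Ssub r \<phi>) (M k) 2"
  proof (rule LLc[OF k one_carrier_mat sand_carrier(2)[OF cF cE] sand_carrier(2)[OF cG cE]
        _ refl refl k q(1) q'(1) _ e2 e3])
    show "?E = 1\<^sub>m ?n * ?E" using cE by simp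
    show "?E * ?E = ?E" using e_idem_l[OF k] .
    show "?E \<noteq> 0\<^sub>m ?n ?n" by (rule nz)
    show "\<forall>c'. ?Y2 \<noteq> c' \<cdot>\<^sub>m ?E"
    proof (intro allI notI)
      fix c' assume h: "?Y2 = c' \<cdot>\<^sub>m ?E"
      then have "?F * ?Y2 = ?F * (c' \<cdot>\<^sub>m ?E)" by simp
      also have "\<dots> = c' \<cdot>\<^sub>m (?F * ?E)" using cE cF by (simp add: mult_smult_distrib)
      finally have "?Y2 = 0\<^sub>m ?n ?n" using e2 FE by simp
      then show False using bc A2 by simp
    qed
    show "\<forall>a b. ?Y3 \<noteq> a \<cdot>\<^sub>m ?E + b \<cdot>\<^sub>m ?Y2"
    proof (intro allI notI)
      fix a b assume h: "?Y3 = a \<cdot>\<^sub>m ?E + b \<cdot>\<^sub>m ?Y2"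
      then have "?G * ?Y3 = ?G * (a \<cdot>\<^sub>m ?E + b \<cdot>\<^sub>m ?Y2)" by simp
      also have "\<dots> = a \<cdot>\<^sub>m (?G * ?E) + b \<cdot>\<^sub>m (?G * ?Y2)" by (rule lin_mult[OF cG cE cY(1)])
      finally have "?Y3 = 0\<^sub>m ?n ?n" using e3 GE GY2 by simp
      then show False using bc' A3 by simp
    qed
  qed
  then show False using len by simp
qed

end

context LS begin

lemma big: assumes k: "k < r" and len: "length_le d m (Ssub r \<phi>) (M k) 2"
  and nz: "e k l \<noteq> 0\<^sub>m (D l) (D l)" and nI: "e k l \<noteq> 1\<^sub>m (D l)" and three: "3 \<le> D l"
  shows False
proof -
  let ?n = "D l" let ?E = "e k l"
  obtain q where q: "q < r" "q \<noteq> k" "e q l \<noteq> 0\<^sub>m ?n ?n" using exists_other[OF k nI] by blast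
  let ?F = "e q l"
  show False
  proof (cases "\<exists>q'<r. q' \<noteq> k \<and> q' \<noteq> q \<and> e q' l \<noteq> 0\<^sub>m ?n ?n")
    case True
    then show False using three_others[OF k len nz q] by blast
  next
    case False
    then have sum: "?E + ?F = 1\<^sub>m ?n" using sum_pair[OF k q(1) q(2)[symmetric]] by blast
    have cE: "?E \<in> carrier_mat ?n ?n" and cF: "?F \<in> carrier_mat ?n ?n" using e_carrier k q by auto
    have EE: "?E * ?E = ?E" and FF: "?F * ?F = ?F" using e_idem_l k q by auto
    have FE: "?F * ?E = 0\<^sub>m ?n ?n" and EF: "?E * ?F = 0\<^sub>m ?n ?n" using e_orth_l q k by auto
    have dE: "dim_row ?E = ?n" "dim_col ?E = ?n" and dF: "dim_row ?F = ?n" "dim_col ?F = ?n"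
      using cE cF by auto
    obtain c0 e0 where ce: "c0 < ?n" "e0 < ?n" "?E $$ (c0,e0) \<noteq> 0" using mat_nz_entry[OF cE nz] by blast
    obtain x1 b1 where xb: "x1 < ?n" "b1 < ?n" "?F $$ (x1,b1) \<noteq> 0" using mat_nz_entry[OF cF q(3)] by blast
    let ?Ez = "?E $$ (c0,e0)"
    define Z where "Z = (\<lambda>G a. G * Um ?n a c0 * ?E)"
    have cZ: "G \<in> carrier_mat ?n ?n \<Longrightarrow> Z G a \<in> carrier_mat ?n ?n" for G a
      unfolding Z_def using sand_carrier cE by auto
    have Zent: "G \<in> carrier_mat ?n ?n \<Longrightarrow> x < ?n \<Longrightarrow> a < ?n \<Longrightarrow> Z G a $$ (x,e0) = G $$ (x,a) * ?Ez" for G x a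
      unfolding Z_def by (rule sand_entry) (use cE ce in auto)
    have dZ: "G \<in> carrier_mat ?n ?n \<Longrightarrow> dim_row (Z G a) = ?n \<and> dim_col (Z G a) = ?n" for G a
      using cZ by auto
    have Zeig: "G \<in> carrier_mat ?n ?n \<Longrightarrow> G * G = G \<Longrightarrow> G * Z G a = Z G a" for G a
      unfolding Z_def by (rule sand_eig) (use cE in auto)
    have Zorth: "G \<in> carrier_mat ?n ?n \<Longrightarrow> H \<in> carrier_mat ?n ?n \<Longrightarrow> G * H = 0\<^sub>m ?n ?n \<Longrightarrow> G * Z H a = 0\<^sub>m ?n ?n" for G H a
      unfolding Z_def by (rule sand_orth) (use cE in auto)
    have ZX: "Z G a = (G * Um ?n a c0) * ?E" for G a unfolding Z_def by simp
    have cX: "G \<in> carrier_mat ?n ?n \<Longrightarrow> G * Um ?n a c0 \<in> carrier_mat ?n ?n" for G a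
      using sand_carrier(2) cE by blast
    have Znz: "G \<in> carrier_mat ?n ?n \<Longrightarrow> x < ?n \<Longrightarrow> a < ?n \<Longrightarrow> G $$ (x,a) \<noteq> 0 \<Longrightarrow> Z G a \<noteq> 0\<^sub>m ?n ?n" for G x a
    proof
      assume "G \<in> carrier_mat ?n ?n" "x < ?n" "a < ?n" "G $$ (x,a) \<noteq> 0" "Z G a = 0\<^sub>m ?n ?n"
      then have "Z G a $$ (x,e0) = 0" using ce by simp
      then show False using Zent \<open>G \<in> carrier_mat ?n ?n\<close> \<open>x < ?n\<close> \<open>a < ?n\<close> \<open>G $$ (x,a) \<noteq> 0\<close> ce by simp
    qed
    have Zpar: "G \<in> carrier_mat ?n ?n \<Longrightarrow> a < ?n \<Longrightarrow> b < ?n \<Longrightarrow> Z G a = c \<cdot>\<^sub>m Z G b \<Longrightarrow>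
        \<forall>x<?n. G $$ (x,a) = c * G $$ (x,b)" for G a b c
    proof (intro allI impI)
      fix x assume G: "G \<in> carrier_mat ?n ?n" and ab: "a < ?n" "b < ?n" and h: "Z G a = c \<cdot>\<^sub>m Z G b" and x: "x < ?n"
      have "Z G a $$ (x,e0) = (c \<cdot>\<^sub>m Z G b) $$ (x,e0)" using h by simp
      also have "\<dots> = c * Z G b $$ (x,e0)" using dZ[OF G] x ce by simp
      finally have "G $$ (x,a) * ?Ez = c * (G $$ (x,b) * ?Ez)" using Zent G x ab by simp
      then show "G $$ (x,a) = c * G $$ (x,b)" using ce(3) by (simp add: mult.assoc)
    qed
    have lenF: "\<not> length_le d m (Ssub r \<phi>) (M k) 2"
    proof (cases "\<exists>a<?n. \<not> (\<exists>\<alpha>. \<forall>x<?n. ?E $$ (x,a) = \<alpha> * ?E $$ (x,e0))")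
      case True
      then obtain a where a: "a < ?n" "\<not> (\<exists>\<alpha>. \<forall>x<?n. ?E $$ (x,a) = \<alpha> * ?E $$ (x,e0))" by blast
      show ?thesis
      proof (rule LLc[OF k cX[OF cE] cX[OF cE] cX[OF cF] ZX ZX ZX k k q(1) Zeig[OF cE EE] Zeig[OF cE EE] Zeig[OF cF FF]])
        show "Z ?E e0 \<noteq> 0\<^sub>m ?n ?n" by (rule Znz[OF cE ce(1) ce(2) ce(3)])
        show "\<forall>c. Z ?E a \<noteq> c \<cdot>\<^sub>m Z ?E e0"
        proof (intro allI notI)
          fix c assume "Z ?E a = c \<cdot>\<^sub>m Z ?E e0"
          then have "\<forall>x<?n. ?E $$ (x,a) = c * ?E $$ (x,e0)" by (rule Zpar[OF cE a(1) ce(2)])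
          then show False using a(2) by blast
        qed
        show "\<forall>a' b'. Z ?F b1 \<noteq> a' \<cdot>\<^sub>m Z ?E e0 + b' \<cdot>\<^sub>m Z ?E a"
        proof (intro allI notI)
          fix a' b' assume h: "Z ?F b1 = a' \<cdot>\<^sub>m Z ?E e0 + b' \<cdot>\<^sub>m Z ?E a"
          then have "?E * Z ?F b1 = ?E * (a' \<cdot>\<^sub>m Z ?E e0 + b' \<cdot>\<^sub>m Z ?E a)" by simp
          also have "\<dots> = a' \<cdot>\<^sub>m (?E * Z ?E e0) + b' \<cdot>\<^sub>m (?E * Z ?E a)" by (rule lin_mult[OF cE cZ[OF cE] cZ[OF cE]])
          also have "\<dots> = Z ?F b1" using h Zeig[OF cE EE] by simp
          finally have "Z ?F b1 = 0\<^sub>m ?n ?n" using Zorth[OF cE cF EF] by simp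
          then show False using Znz[OF cF xb(1) xb(2) xb(3)] by simp
        qed
      qed
    next
      case False
      note Epar = False
      show ?thesis
      proof (cases "\<exists>b<?n. \<not> (\<exists>\<beta>. \<forall>x<?n. ?F $$ (x,b) = \<beta> * ?F $$ (x,b1))")
        case True
        then obtain b where b: "b < ?n" "\<not> (\<exists>\<beta>. \<forall>x<?n. ?F $$ (x,b) = \<beta> * ?F $$ (x,b1))" by blast
        show ?thesis
        proof (rule LLc[OF k cX[OF cE] cX[OF cF] cX[OF cF] ZX ZX ZX k q(1) q(1) Zeig[OF cE EE] Zeig[OF cF FF] Zeig[OF cF FF]])
          show "Z ?E e0 \<noteq> 0\<^sub>m ?n ?n" by (rule Znz[OF cE ce(1) ce(2) ce(3)])
          show "\<forall>c. Z ?F b1 \<noteq> c \<cdot>\<^sub>m Z ?E e0"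
          proof (intro allI notI)
            fix c assume h: "Z ?F b1 = c \<cdot>\<^sub>m Z ?E e0"
            then have "?F * Z ?F b1 = ?F * (c \<cdot>\<^sub>m Z ?E e0)" by simp
            also have "\<dots> = c \<cdot>\<^sub>m (?F * Z ?E e0)" by (rule mult_smult_distrib[OF cF cZ[OF cE]])
            finally have "Z ?F b1 = 0\<^sub>m ?n ?n" using Zeig[OF cF FF] Zorth[OF cF cE FE] by simp
            then show False using Znz[OF cF xb(1) xb(2) xb(3)] by simp
          qed
          show "\<forall>a' b'. Z ?F b \<noteq> a' \<cdot>\<^sub>m Z ?E e0 + b' \<cdot>\<^sub>m Z ?F b1"
          proof (intro allI notI)
            fix a' b' assume h: "Z ?F b = a' \<cdot>\<^sub>m Z ?E e0 + b' \<cdot>\<^sub>m Z ?F b1"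
            then have "?F * Z ?F b = ?F * (a' \<cdot>\<^sub>m Z ?E e0 + b' \<cdot>\<^sub>m Z ?F b1)" by simp
            also have "\<dots> = a' \<cdot>\<^sub>m (?F * Z ?E e0) + b' \<cdot>\<^sub>m (?F * Z ?F b1)" by (rule lin_mult[OF cF cZ[OF cE] cZ[OF cF]])
            finally have "Z ?F b = b' \<cdot>\<^sub>m Z ?F b1" using Zeig[OF cF FF] Zorth[OF cF cE FE] cZ[OF cF] by simp
            then have "\<forall>x<?n. ?F $$ (x,b) = b' * ?F $$ (x,b1)" by (rule Zpar[OF cF b(1) xb(2)])
            then show False using b(2) by blast
          qed
        qed
      next
        case False
        note Fpar = False
        have "\<forall>a\<in>{..<?n}. \<exists>\<alpha>. \<forall>x<?n. ?E $$ (x,a) = \<alpha> * ?E $$ (x,e0)" using Epar by auto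
        from bchoice[OF this] obtain \<alpha> where \<alpha>: "\<forall>a\<in>{..<?n}. \<forall>x<?n. ?E $$ (x,a) = \<alpha> a * ?E $$ (x,e0)"
          by blast
        have "\<forall>a\<in>{..<?n}. \<exists>\<beta>. \<forall>x<?n. ?F $$ (x,a) = \<beta> * ?F $$ (x,b1)" using Fpar by auto
        from bchoice[OF this] obtain \<beta> where \<beta>: "\<forall>a\<in>{..<?n}. \<forall>x<?n. ?F $$ (x,a) = \<beta> a * ?F $$ (x,b1)"
          by blast
        have "\<forall>x<3. \<forall>a<3. (if x = a then 1 else 0) = \<alpha> a * ?E $$ (x,e0) + \<beta> a * ?F $$ (x,b1)"
        proof (intro allI impI)
          fix x a :: nat assume "x < 3" "a < 3"
          then have xa: "x < ?n" "a < ?n" using three by auto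
          have "(if x = a then 1 else 0) = (1\<^sub>m ?n :: 'a mat) $$ (x,a)" using xa by simp
          also have "\<dots> = (?E + ?F) $$ (x,a)" using sum by simp
          also have "\<dots> = ?E $$ (x,a) + ?F $$ (x,a)" using xa dF by simp
          finally show "(if x = a then 1 else 0) = \<alpha> a * ?E $$ (x,e0) + \<beta> a * ?F $$ (x,b1)"
            using \<alpha> \<beta> xa by simp
        qed
        then have False by (rule det_contra)
        then show ?thesis ..
      qed
    qed
    then show False using len by simp
  qed
qed

end




lemma mult2_entry: fixes A :: "'a::field mat"
  assumes "A \<in> carrier_mat 2 2" "B \<in> carrier_mat 2 2" "i < 2" "j < 2"
  shows "(A * B) $$ (i,j) = A $$ (i,0) * B $$ (0,j) + A $$ (i,1) * B $$ (1,j)"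
proof -
  have "(A * B) $$ (i,j) = (\<Sum>t<2. A $$ (i,t) * B $$ (t,j))" by (rule mult_entry) (use assms in auto)
  also have "\<dots> = A $$ (i,0) * B $$ (0,j) + A $$ (i,1) * B $$ (1,j)" by (simp add: numeral_2_eq_2)
  finally show ?thesis .
qed

lemma less2: "(x::nat) < 2 \<Longrightarrow> x = 0 \<or> x = 1" by auto

lemma rank1_conj: fixes E F :: "'a::field mat"
  assumes cE: "E \<in> carrier_mat 2 2" and cF: "F \<in> carrier_mat 2 2"
  and EE: "E * E = E" and FF: "F * F = F" and EF: "E * F = 0\<^sub>m 2 2" and FE: "F * E = 0\<^sub>m 2 2"
  and nE: "E \<noteq> 0\<^sub>m 2 2" and nF: "F \<noteq> 0\<^sub>m 2 2"
  shows "\<exists>P Q. P \<in> carrier_mat 2 2 \<and> Q \<in> carrier_mat 2 2 \<and> Q * P = 1\<^sub>m 2 \<and>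
     Q * E * P = Um 2 0 0 \<and> Q * F * P = Um 2 1 1"
proof -
  obtain i0 j0 where ij0: "i0 < 2" "j0 < 2" "E $$ (i0,j0) \<noteq> 0" using mat_nz_entry[OF cE nE] by blast
  obtain i1 j1 where ij1: "i1 < 2" "j1 < 2" "F $$ (i1,j1) \<noteq> 0" using mat_nz_entry[OF cF nF] by blast
  have prod: "\<And>(A::'a mat) B x y. A \<in> carrier_mat 2 2 \<Longrightarrow> B \<in> carrier_mat 2 2 \<Longrightarrow> x < 2 \<Longrightarrow> y < 2 \<Longrightarrow>
     A $$ (x,0) * B $$ (0,y) + A $$ (x,1) * B $$ (1,y) = (A * B) $$ (x,y)"
    by (rule mult2_entry[symmetric])
  have EEe: "x < 2 \<Longrightarrow> y < 2 \<Longrightarrow> E $$ (x,0) * E $$ (0,y) + E $$ (x,1) * E $$ (1,y) = E $$ (x,y)" for x y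
    using prod[OF cE cE] EE by simp
  have FFe: "x < 2 \<Longrightarrow> y < 2 \<Longrightarrow> F $$ (x,0) * F $$ (0,y) + F $$ (x,1) * F $$ (1,y) = F $$ (x,y)" for x y
    using prod[OF cF cF] FF by simp
  have EFe: "x < 2 \<Longrightarrow> y < 2 \<Longrightarrow> E $$ (x,0) * F $$ (0,y) + E $$ (x,1) * F $$ (1,y) = 0" for x y
    using prod[OF cE cF] EF by simp
  have FEe: "x < 2 \<Longrightarrow> y < 2 \<Longrightarrow> F $$ (x,0) * E $$ (0,y) + F $$ (x,1) * E $$ (1,y) = 0" for x y
    using prod[OF cF cE] FE by simp
  define P :: "'a mat" where "P = mat 2 2 (\<lambda>(x,j). if j = 0 then E $$ (x,j0) else F $$ (x,j1))"
  define Q :: "'a mat" where "Q = mat 2 2 (\<lambda>(i,x). if i = 0 then E $$ (i0,x) / E $$ (i0,j0) else F $$ (i1,x) / F $$ (i1,j1))"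
  have cP: "P \<in> carrier_mat 2 2" and cQ: "Q \<in> carrier_mat 2 2" by (auto simp: P_def Q_def)
  have Pe: "x < 2 \<Longrightarrow> j < 2 \<Longrightarrow> P $$ (x,j) = (if j = 0 then E $$ (x,j0) else F $$ (x,j1))" for x j
    by (simp add: P_def)
  have Qe: "i < 2 \<Longrightarrow> x < 2 \<Longrightarrow> Q $$ (i,x) = (if i = 0 then E $$ (i0,x) / E $$ (i0,j0) else F $$ (i1,x) / F $$ (i1,j1))" for i x
    by (simp add: Q_def)
  have QP: "Q * P = 1\<^sub>m 2"
  proof (rule eq_matI)
    fix i j assume "i < dim_row (1\<^sub>m 2 :: 'a mat)" "j < dim_col (1\<^sub>m 2 :: 'a mat)"
    then have ij: "i < 2" "j < 2" by auto
    have "(Q * P) $$ (i,j) = Q $$ (i,0) * P $$ (0,j) + Q $$ (i,1) * P $$ (1,j)"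
      by (rule mult2_entry[OF cQ cP ij])
    also have "\<dots> = (1\<^sub>m 2 :: 'a mat) $$ (i,j)"
      using less2[OF ij(1)] less2[OF ij(2)]
    proof (elim disjE)
      assume "i = 0" "j = 0"
      then show ?thesis using EEe[OF ij0(1,2)] ij0 by (simp add: Pe Qe field_simps)
    next
      assume "i = 0" "j = 1"
      then show ?thesis using EFe[OF ij0(1) ij1(2)] ij0 by (simp add: Pe Qe field_simps)
    next
      assume "i = 1" "j = 0"
      then show ?thesis using FEe[OF ij1(1) ij0(2)] ij1 by (simp add: Pe Qe field_simps)
    next
      assume "i = 1" "j = 1"
      then show ?thesis using FFe[OF ij1(1,2)] ij1 by (simp add: Pe Qe field_simps)
    qed
    finally show "(Q * P) $$ (i,j) = 1\<^sub>m 2 $$ (i,j)" .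
  qed (use cQ cP in auto)
  have EP: "E * P = P * Um 2 0 0"
  proof (rule eq_matI)
    fix x j assume "x < dim_row (P * Um 2 0 0)" "j < dim_col (P * Um 2 0 0)"
    then have xj: "x < 2" "j < 2" using cP by auto
    have "(E * P) $$ (x,j) = E $$ (x,0) * P $$ (0,j) + E $$ (x,1) * P $$ (1,j)"
      by (rule mult2_entry[OF cE cP xj])
    moreover have "(P * Um 2 0 0) $$ (x,j) = P $$ (x,0) * Um 2 0 0 $$ (0,j) + P $$ (x,1) * Um 2 0 0 $$ (1,j)"
      by (rule mult2_entry[OF cP Um_carrier xj])
    ultimately show "(E * P) $$ (x,j) = (P * Um 2 0 0) $$ (x,j)"
      using less2[OF xj(2)] EEe[OF xj(1) ij0(2)] EFe[OF xj(1) ij1(2)] xj by (auto simp: Pe Um_index)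
  qed (use cE cP in auto)
  have FP: "F * P = P * Um 2 1 1"
  proof (rule eq_matI)
    fix x j assume "x < dim_row (P * Um 2 1 1)" "j < dim_col (P * Um 2 1 1)"
    then have xj: "x < 2" "j < 2" using cP by auto
    have "(F * P) $$ (x,j) = F $$ (x,0) * P $$ (0,j) + F $$ (x,1) * P $$ (1,j)"
      by (rule mult2_entry[OF cF cP xj])
    moreover have "(P * Um 2 1 1) $$ (x,j) = P $$ (x,0) * Um 2 1 1 $$ (0,j) + P $$ (x,1) * Um 2 1 1 $$ (1,j)"
      by (rule mult2_entry[OF cP Um_carrier xj])
    ultimately show "(F * P) $$ (x,j) = (P * Um 2 1 1) $$ (x,j)"
      using less2[OF xj(2)] FEe[OF xj(1) ij0(2)] FFe[OF xj(1) ij1(2)] xj by (auto simp: Pe Um_index)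
  qed (use cF cP in auto)
  have "Q * E * P = Q * (E * P)" by (rule assoc_mult_mat[OF cQ cE cP])
  also have "\<dots> = Q * (P * Um 2 0 0)" using EP by simp
  also have "\<dots> = Q * P * Um 2 0 0" by (rule assoc_mult_mat[OF cQ cP Um_carrier, symmetric])
  finally have QEP: "Q * E * P = Um 2 0 0" using QP by simp
  have "Q * F * P = Q * (F * P)" by (rule assoc_mult_mat[OF cQ cF cP])
  also have "\<dots> = Q * (P * Um 2 1 1)" using FP by simp
  also have "\<dots> = Q * P * Um 2 1 1" by (rule assoc_mult_mat[OF cQ cP Um_carrier, symmetric])
  finally have QFP: "Q * F * P = Um 2 1 1" using QP by simp
  show ?thesis using cP cQ QP QEP QFP by blast
qed

lemma conj_iso: fixes P Q :: "'a::field mat"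
  assumes cP: "P \<in> carrier_mat n n" and cQ: "Q \<in> carrier_mat n n" and QP: "Q * P = 1\<^sub>m n"
  shows "mat_alg_iso n (\<lambda>A. Q * A * P)"
proof -
  have PQ: "P * Q = 1\<^sub>m n" by (rule mat_mult_left_right_inverse[OF cQ cP QP])
  have bk: "P * (Q * A * P) * Q = A" if A: "A \<in> carrier_mat n n" for A
  proof -
    have AP: "A * P \<in> carrier_mat n n" using A cP by (rule mc)
    have "Q * A * P = Q * (A * P)" by (rule assoc_mult_mat[OF cQ A cP])
    then have "P * (Q * A * P) = (P * Q) * (A * P)" using assoc_mult_mat[OF cP cQ AP] by simp
    then have "P * (Q * A * P) = A * P" using PQ AP by (simp add: left_mult_one_mat)
    then have "P * (Q * A * P) * Q = A * (P * Q)" using assoc_mult_mat[OF A cP cQ] by simp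
    then show ?thesis using PQ A by (simp add: right_mult_one_mat)
  qed
  have fwd: "Q * (P * A * Q) * P = A" if A: "A \<in> carrier_mat n n" for A
  proof -
    have AQ: "A * Q \<in> carrier_mat n n" using A cQ by (rule mc)
    have "P * A * Q = P * (A * Q)" by (rule assoc_mult_mat[OF cP A cQ])
    then have "Q * (P * A * Q) = (Q * P) * (A * Q)" using assoc_mult_mat[OF cQ cP AQ] by simp
    then have "Q * (P * A * Q) = A * Q" using QP AQ by (simp add: left_mult_one_mat)
    then have "Q * (P * A * Q) * P = A * (Q * P)" using assoc_mult_mat[OF A cQ cP] by simp
    then show ?thesis using QP A by (simp add: right_mult_one_mat)
  qed
  have bij: "bij_betw (\<lambda>A. Q * A * P) (carrier_mat n n) (carrier_mat n n)"
  proof (rule bij_betw_byWitness[where f' = "\<lambda>A. P * A * Q"])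
    show "\<forall>a\<in>carrier_mat n n. P * (Q * a * P) * Q = a" using bk by blast
    show "\<forall>a'\<in>carrier_mat n n. Q * (P * a' * Q) * P = a'" using fwd by blast
    show "(\<lambda>A. Q * A * P) ` carrier_mat n n \<subseteq> carrier_mat n n" using cP cQ by (auto intro!: mc)
    show "(\<lambda>A. P * A * Q) ` carrier_mat n n \<subseteq> carrier_mat n n" using cP cQ by (auto intro!: mc)
  qed
  have hom: "\<forall>A\<in>carrier_mat n n. \<forall>B\<in>carrier_mat n n. Q * (A + B) * P = Q * A * P + Q * B * P \<and>
      Q * (A * B) * P = Q * A * P * (Q * B * P)"
  proof (intro ballI conjI)
    fix A B :: "'a mat" assume A: "A \<in> carrier_mat n n" and B: "B \<in> carrier_mat n n"
    have QA: "Q * A \<in> carrier_mat n n" using cQ A by (rule mc)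
    have QB: "Q * B \<in> carrier_mat n n" using cQ B by (rule mc)
    have BP: "B * P \<in> carrier_mat n n" using B cP by (rule mc)
    have "Q * (A + B) = Q * A + Q * B" by (rule mult_add_distrib_mat[OF cQ A B])
    then show "Q * (A + B) * P = Q * A * P + Q * B * P" using add_mult_distrib_mat[OF QA QB cP] by simp
    have PQBP: "P * (Q * B * P) = B * P"
    proof -
      have "Q * B * P = Q * (B * P)" by (rule assoc_mult_mat[OF cQ B cP])
      then have "P * (Q * B * P) = (P * Q) * (B * P)" using assoc_mult_mat[OF cP cQ BP] by simp
      then show ?thesis using PQ BP by (simp add: left_mult_one_mat)
    qed
    have "Q * A * P * (Q * B * P) = Q * A * (P * (Q * B * P))"
      by (rule assoc_mult_mat[OF QA cP mc[OF mc[OF cQ B] cP]])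
    also have "\<dots> = Q * A * (B * P)" using PQBP by simp
    also have "\<dots> = Q * (A * (B * P))" by (rule assoc_mult_mat[OF cQ A BP])
    also have "A * (B * P) = A * B * P" by (rule assoc_mult_mat[OF A B cP, symmetric])
    also have "Q * (A * B * P) = Q * (A * B) * P" by (rule assoc_mult_mat[OF cQ mc[OF A B] cP, symmetric])
    finally show "Q * (A * B) * P = Q * A * P * (Q * B * P)" by simp
  qed
  have sm: "\<forall>c. \<forall>A\<in>carrier_mat n n. Q * (c \<cdot>\<^sub>m A) * P = c \<cdot>\<^sub>m (Q * A * P)"
  proof (intro allI ballI)
    fix c and A :: "'a mat" assume A: "A \<in> carrier_mat n n"
    have "Q * (c \<cdot>\<^sub>m A) = c \<cdot>\<^sub>m (Q * A)" by (rule mult_smult_distrib[OF cQ A])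
    moreover have "(c \<cdot>\<^sub>m (Q * A)) * P = c \<cdot>\<^sub>m (Q * A * P)"
      by (rule mult_smult_assoc_mat[OF mc[OF cQ A] cP])
    ultimately show "Q * (c \<cdot>\<^sub>m A) * P = c \<cdot>\<^sub>m (Q * A * P)" by simp
  qed
  have one: "Q * 1\<^sub>m n * P = 1\<^sub>m n" using cQ QP by simp
  show ?thesis unfolding mat_alg_iso_def using bij hom sm one by blast
qed

lemma diag_set: "{a \<cdot>\<^sub>m Um 2 0 0 + b \<cdot>\<^sub>m Um 2 1 1 | a b. True} =
   {A \<in> carrier_mat 2 2. A $$ (0,1) = 0 \<and> A $$ (1,0) = (0::'a::field)}"
proof
  show "{a \<cdot>\<^sub>m Um 2 0 0 + b \<cdot>\<^sub>m Um 2 1 1 | a b. True} \<subseteq> {A \<in> carrier_mat 2 2. A $$ (0,1) = 0 \<and> A $$ (1,0) = (0::'a)}"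
    by (auto simp: Um_index)
  show "{A \<in> carrier_mat 2 2. A $$ (0,1) = 0 \<and> A $$ (1,0) = (0::'a)} \<subseteq> {a \<cdot>\<^sub>m Um 2 0 0 + b \<cdot>\<^sub>m Um 2 1 1 | a b. True}"
  proof
    fix A :: "'a mat" assume "A \<in> {A \<in> carrier_mat 2 2. A $$ (0,1) = 0 \<and> A $$ (1,0) = 0}"
    then have A: "A \<in> carrier_mat 2 2" "A $$ (0,1) = 0" "A $$ (1,0) = 0" by auto
    have "A = A $$ (0,0) \<cdot>\<^sub>m Um 2 0 0 + A $$ (1,1) \<cdot>\<^sub>m Um 2 1 1"
    proof (rule eq_matI)
      fix i j assume "i < dim_row (A $$ (0,0) \<cdot>\<^sub>m Um 2 0 0 + A $$ (1,1) \<cdot>\<^sub>m (Um 2 1 1 :: 'a mat))"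
        "j < dim_col (A $$ (0,0) \<cdot>\<^sub>m Um 2 0 0 + A $$ (1,1) \<cdot>\<^sub>m (Um 2 1 1 :: 'a mat))"
      then have ij: "i < 2" "j < 2" by auto
      show "A $$ (i,j) = (A $$ (0,0) \<cdot>\<^sub>m Um 2 0 0 + A $$ (1,1) \<cdot>\<^sub>m Um 2 1 1) $$ (i,j)"
        using less2[OF ij(1)] less2[OF ij(2)] A ij by (auto simp: Um_index)
    qed (use A in auto)
    then show "A \<in> {a \<cdot>\<^sub>m Um 2 0 0 + b \<cdot>\<^sub>m Um 2 1 1 | a b. True}" by blast
  qed
qed



lemma one_idem: fixes E :: "'a::field mat"
  assumes cE: "E \<in> carrier_mat 1 1" and EE: "E * E = E" and nz: "E \<noteq> 0\<^sub>m 1 1"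
  shows "E = 1\<^sub>m 1"
proof -
  have "(E * E) $$ (0,0) = (\<Sum>t<1. E $$ (0,t) * E $$ (t,0))" by (rule mult_entry) (use cE in auto)
  then have h: "E $$ (0,0) * E $$ (0,0) = E $$ (0,0)" using EE by simp
  have "E $$ (0,0) \<noteq> 0"
  proof
    assume "E $$ (0,0) = 0"
    then have "E = 0\<^sub>m 1 1" using cE by (intro eq_matI) auto
    then show False using nz by simp
  qed
  then have "E $$ (0,0) = 1" using h by (metis mult_cancel_right2)
  then show ?thesis using cE by (intro eq_matI) auto
qed

lemma smult_zcomp: "c \<cdot>\<^sub>m zcomp d m x = zcomp d m x"
  by (simp add: zcomp_DD)

lemma lin_conj: fixes Q :: "'a::field mat"
  assumes cQ: "Q \<in> carrier_mat n n" and cP: "P \<in> carrier_mat n n" and cE: "E \<in> carrier_mat n n"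
    and cF: "F \<in> carrier_mat n n"
  shows "Q * (a \<cdot>\<^sub>m E + b \<cdot>\<^sub>m F) * P = a \<cdot>\<^sub>m (Q * E * P) + b \<cdot>\<^sub>m (Q * F * P)"
proof -
  have "Q * (a \<cdot>\<^sub>m E + b \<cdot>\<^sub>m F) = a \<cdot>\<^sub>m (Q * E) + b \<cdot>\<^sub>m (Q * F)" by (rule lin_mult[OF cQ cE cF])
  moreover have "(a \<cdot>\<^sub>m (Q * E) + b \<cdot>\<^sub>m (Q * F)) * P = (a \<cdot>\<^sub>m (Q * E)) * P + (b \<cdot>\<^sub>m (Q * F)) * P"
    by (rule add_mult_distrib_mat) (use cQ cE cF cP in \<open>auto intro: mc\<close>)
  moreover have "(a \<cdot>\<^sub>m (Q * E)) * P = a \<cdot>\<^sub>m (Q * E * P)" by (rule mult_smult_assoc_mat[OF mc[OF cQ cE] cP])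
  moreover have "(b \<cdot>\<^sub>m (Q * F)) * P = b \<cdot>\<^sub>m (Q * F * P)" by (rule mult_smult_assoc_mat[OF mc[OF cQ cF] cP])
  ultimately show ?thesis by simp
qed

context LS begin

lemma sub_Scomp: assumes k: "k < r" and off: "\<forall>x. x \<noteq> l \<longrightarrow> e k x = zcomp d m x"
  shows "Sfac \<phi> k \<subseteq> Scomp d m l"
proof
  fix f assume "f \<in> Sfac \<phi> k"
  then obtain c where f: "f = tsmult c (e k)" using Sfac_eq[OF k] by blast
  have "f \<in> Stilde d m" using f e_St[OF k] by simp
  moreover have "\<forall>x. x \<noteq> l \<longrightarrow> f x = zcomp d m x" using off f by (simp add: tsmult_def smult_zcomp)
  ultimately show "f \<in> Scomp d m l" unfolding Scomp_def by blast
qed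

lemma case1: assumes k: "k < r" and l: "l < m" "d l = 1" "e k l = 1\<^sub>m 1"
  and off: "\<forall>x. x \<noteq> l \<longrightarrow> e k x = zcomp d m x"
  shows "Sfac \<phi> k = Scomp d m l"
proof
  show "Sfac \<phi> k \<subseteq> Scomp d m l" by (rule sub_Scomp[OF k off])
  show "Scomp d m l \<subseteq> Sfac \<phi> k"
  proof
    fix f :: "nat \<Rightarrow> 'a mat" assume "f \<in> Scomp d m l"
    then have fS: "f \<in> Stilde d m" and fo: "\<forall>x. x \<noteq> l \<longrightarrow> f x = zcomp d m x" unfolding Scomp_def by auto
    have Dl: "D l = 1" using l by (simp add: DD_def)
    have cf: "f l \<in> carrier_mat 1 1" using StildeD[OF fS, of l] Dl by simp
    have "f = tsmult (f l $$ (0,0)) (e k)"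
    proof (rule St_ext[OF fS tsmult_St[OF e_St[OF k]]])
      fix x assume "x < m"
      show "f x = tsmult (f l $$ (0,0)) (e k) x"
      proof (cases "x = l")
        case True
        then show ?thesis using cf l(3) by (auto simp: tsmult_def intro!: eq_matI)
      next
        case False
        then show ?thesis using fo off by (simp add: tsmult_def smult_zcomp)
      qed
    qed
    then show "f \<in> Sfac \<phi> k" using Sfac_eq[OF k] by blast
  qed
qed

lemma case2: assumes k: "k < r" and ll: "l \<noteq> l'" "e k l = 1\<^sub>m 1" "e k l' = 1\<^sub>m 1"
  and off: "\<forall>x. x \<noteq> l \<and> x \<noteq> l' \<longrightarrow> e k x = zcomp d m x"
  shows "Sfac \<phi> k = {(\<lambda>x. if x = l \<or> x = l' then c \<cdot>\<^sub>m 1\<^sub>m 1 else zcomp d m x) | c. True}"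
proof -
  have "tsmult c (e k) = (\<lambda>x. if x = l \<or> x = l' then c \<cdot>\<^sub>m 1\<^sub>m 1 else zcomp d m x)" for c
    using ll off by (auto simp: tsmult_def smult_zcomp)
  then show ?thesis using Sfac_eq[OF k] by simp
qed

lemma main_k: assumes lenall: "\<forall>k<r. length_le d m (Ssub r \<phi>) (M k) 2" and k: "k < r"
  shows "(\<exists>i<m. Sfac \<phi> k = Scomp d m i)
   \<or> (\<exists>i<m. \<exists>j<m. i \<noteq> j \<and> d i = 1 \<and> d j = 1 \<and>
        Sfac \<phi> k = {(\<lambda>l. if l = i \<or> l = j then c \<cdot>\<^sub>m 1\<^sub>m 1 else zcomp d m l) | c. True})
   \<or> (\<exists>q<r. q \<noteq> k \<and> (\<exists>i<m. d i = 2 \<and>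
        Sfac \<phi> k \<subseteq> Scomp d m i \<and> Sfac \<phi> q \<subseteq> Scomp d m i \<and>
        (\<exists>\<psi>. mat_alg_iso 2 \<psi> \<and>
           \<psi> ` {(tadd x y) i | x y. x \<in> Sfac \<phi> k \<and> y \<in> Sfac \<phi> q} =
             {A \<in> carrier_mat 2 2. A $$ (0,1) = 0 \<and> A $$ (1,0) = 0})))"
proof -
  have len: "length_le d m (Ssub r \<phi>) (M k) 2" using lenall k by blast
  obtain l where l: "e k l \<noteq> zcomp d m l"
  proof (rule ccontr)
    assume "\<not> thesis"
    then have "\<forall>l. e k l = zcomp d m l" using that by blast
    then have "e k = tzero d m" unfolding tzero_def by auto
    then show False using e_nz[OF k] by simp
  qed
  have lm: "l < m" by (rule nzc[OF k l])
  have Dl: "D l = d l" using lm by (simp add: DD_def)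
  have dpos: "0 < d l" using d_pos lm by blast
  let ?E = "e k l"
  have nz: "?E \<noteq> 0\<^sub>m (D l) (D l)" using l by (simp add: zcomp_DD)
  have cE: "?E \<in> carrier_mat (D l) (D l)" by (rule e_carrier[OF k])
  have le2: "d l \<le> 2"
  proof (rule ccontr)
    assume "\<not> d l \<le> 2"
    then have three: "3 \<le> D l" using Dl by simp
    show False
    proof (cases "?E = 1\<^sub>m (D l)")
      case True then show False using no_I2[OF k len True] three by simp
    next
      case False then show False using big[OF k len nz False three] by simp
    qed
  qed
  show ?thesis
  proof (cases "d l = 2")
    case True
    have two: "2 \<le> D l" using True Dl by simp
    have nI: "?E \<noteq> 1\<^sub>m (D l)" using no_I2[OF k len _ two] by blast
    have offk: "\<forall>x. x \<noteq> l \<longrightarrow> e k x = zcomp d m x" using two_comp[OF k len l two] by blast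
    obtain q where q: "q < r" "q \<noteq> k" "e q l \<noteq> 0\<^sub>m (D l) (D l)" using exists_other[OF k nI] by blast
    let ?F = "e q l"
    have lenq: "length_le d m (Ssub r \<phi>) (M q) 2" using lenall q by blast
    have ql: "e q l \<noteq> zcomp d m l" using q(3) by (simp add: zcomp_DD)
    have offq: "\<forall>x. x \<noteq> l \<longrightarrow> e q x = zcomp d m x" using two_comp[OF q(1) lenq ql two] by blast
    have cF: "?F \<in> carrier_mat (D l) (D l)" by (rule e_carrier[OF q(1)])
    have D2: "D l = 2" using True Dl by simp
    obtain P Q where PQ: "P \<in> carrier_mat 2 2" "Q \<in> carrier_mat 2 2" "Q * P = 1\<^sub>m 2"
      "Q * ?E * P = Um 2 0 0" "Q * ?F * P = Um 2 1 1"
      using rank1_conj[of ?E ?F] cE cF D2 e_idem_l[OF k] e_idem_l[OF q(1)] e_orth_l[OF k q(1) q(2)[symmetric]]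
        e_orth_l[OF q(1) k q(2)] nz q(3) by auto
    have iso: "mat_alg_iso 2 (\<lambda>A. Q * A * P)" by (rule conj_iso[OF PQ(1,2,3)])
    have setq: "{(tadd x y) l | x y. x \<in> Sfac \<phi> k \<and> y \<in> Sfac \<phi> q} = {a \<cdot>\<^sub>m ?E + b \<cdot>\<^sub>m ?F | a b. True}"
    proof
      show "{(tadd x y) l | x y. x \<in> Sfac \<phi> k \<and> y \<in> Sfac \<phi> q} \<subseteq> {a \<cdot>\<^sub>m ?E + b \<cdot>\<^sub>m ?F | a b. True}"
        using Sfac_eq[OF k] Sfac_eq[OF q(1)] by (auto simp: tadd_def tsmult_def)
      show "{a \<cdot>\<^sub>m ?E + b \<cdot>\<^sub>m ?F | a b. True} \<subseteq> {(tadd x y) l | x y. x \<in> Sfac \<phi> k \<and> y \<in> Sfac \<phi> q}"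
      proof
        fix A :: "'a mat" assume "A \<in> {a \<cdot>\<^sub>m ?E + b \<cdot>\<^sub>m ?F | a b. True}"
        then obtain a b where A: "A = a \<cdot>\<^sub>m ?E + b \<cdot>\<^sub>m ?F" by blast
        have "tsmult a (e k) \<in> Sfac \<phi> k" "tsmult b (e q) \<in> Sfac \<phi> q"
          using Sfac_eq[OF k] Sfac_eq[OF q(1)] by blast+
        moreover have "(tadd (tsmult a (e k)) (tsmult b (e q))) l = A" using A by (simp add: tadd_def tsmult_def)
        ultimately show "A \<in> {(tadd x y) l | x y. x \<in> Sfac \<phi> k \<and> y \<in> Sfac \<phi> q}" by blast
      qed
    qed
    have img: "(\<lambda>A. Q * A * P) ` {a \<cdot>\<^sub>m ?E + b \<cdot>\<^sub>m ?F | a b. True} = {a \<cdot>\<^sub>m Um 2 0 0 + b \<cdot>\<^sub>m Um 2 1 1 | a b. True}"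
    proof -
      have h: "Q * (a \<cdot>\<^sub>m ?E + b \<cdot>\<^sub>m ?F) * P = a \<cdot>\<^sub>m Um 2 0 0 + b \<cdot>\<^sub>m Um 2 1 1" for a b
        using lin_conj[OF PQ(2) PQ(1), of ?E ?F a b] cE cF D2 PQ(4,5) by simp
      show ?thesis
      proof
        show "(\<lambda>A. Q * A * P) ` {a \<cdot>\<^sub>m ?E + b \<cdot>\<^sub>m ?F | a b. True} \<subseteq> {a \<cdot>\<^sub>m Um 2 0 0 + b \<cdot>\<^sub>m Um 2 1 1 | a b. True}"
          using h by auto
        show "{a \<cdot>\<^sub>m Um 2 0 0 + b \<cdot>\<^sub>m Um 2 1 1 | a b. True} \<subseteq> (\<lambda>A. Q * A * P) ` {a \<cdot>\<^sub>m ?E + b \<cdot>\<^sub>m ?F | a b. True}"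
        proof
          fix A :: "'a mat" assume "A \<in> {a \<cdot>\<^sub>m Um 2 0 0 + b \<cdot>\<^sub>m Um 2 1 1 | a b. True}"
          then obtain a b where A: "A = a \<cdot>\<^sub>m Um 2 0 0 + b \<cdot>\<^sub>m Um 2 1 1" by blast
          then have "A = (\<lambda>A. Q * A * P) (a \<cdot>\<^sub>m ?E + b \<cdot>\<^sub>m ?F)" using h by simp
          moreover have "a \<cdot>\<^sub>m ?E + b \<cdot>\<^sub>m ?F \<in> {a \<cdot>\<^sub>m ?E + b \<cdot>\<^sub>m ?F | a b. True}" by blast
          ultimately show "A \<in> (\<lambda>A. Q * A * P) ` {a \<cdot>\<^sub>m ?E + b \<cdot>\<^sub>m ?F | a b. True}" by (rule image_eqI)
        qed
      qed
    qed
    let ?psi = "\<lambda>A. Q * A * P"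
    have psi: "?psi ` {(tadd x y) l | x y. x \<in> Sfac \<phi> k \<and> y \<in> Sfac \<phi> q} =
             {A \<in> carrier_mat 2 2. A $$ (0,1) = 0 \<and> A $$ (1,0) = 0}"
      unfolding setq img diag_set ..
    have s1: "Sfac \<phi> k \<subseteq> Scomp d m l" by (rule sub_Scomp[OF k offk])
    have s2: "Sfac \<phi> q \<subseteq> Scomp d m l" by (rule sub_Scomp[OF q(1) offq])
    have "\<exists>q<r. q \<noteq> k \<and> (\<exists>i<m. d i = 2 \<and>
        Sfac \<phi> k \<subseteq> Scomp d m i \<and> Sfac \<phi> q \<subseteq> Scomp d m i \<and>
        (\<exists>\<psi>. mat_alg_iso 2 \<psi> \<and>
           \<psi> ` {(tadd x y) i | x y. x \<in> Sfac \<phi> k \<and> y \<in> Sfac \<phi> q} =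
             {A \<in> carrier_mat 2 2. A $$ (0,1) = 0 \<and> A $$ (1,0) = 0}))"
      apply (rule exI[of _ q])
      apply (intro conjI q(1) q(2))
      apply (rule exI[of _ l])
      apply (intro conjI lm True s1 s2)
      apply (rule exI[of _ ?psi])
      apply (intro conjI iso psi)
      done
    then show ?thesis by (intro disjI2)
  next
    case False
    then have d1: "d l = 1" using le2 dpos by simp
    have E1: "?E = 1\<^sub>m 1" using one_idem[of ?E] cE Dl d1 e_idem_l[OF k] nz by simp
    show ?thesis
    proof (cases "\<forall>x. x \<noteq> l \<longrightarrow> e k x = zcomp d m x")
      case True
      have "Sfac \<phi> k = Scomp d m l" by (rule case1[OF k lm d1 E1 True])
      then have "\<exists>i<m. Sfac \<phi> k = Scomp d m i" using lm by blast
      then show ?thesis by (rule disjI1)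
    next
      case False
      then obtain l' where l': "l' \<noteq> l" "e k l' \<noteq> zcomp d m l'" by blast
      have lm': "l' < m" by (rule nzc[OF k l'(2)])
      have Dl': "D l' = d l'" using lm' by (simp add: DD_def)
      have d1': "d l' = 1"
      proof -
        have "\<not> 2 \<le> D l'" using two_comp[OF k len l'(2) _ l'(1)[symmetric] l] by blast
        moreover have "0 < d l'" using d_pos lm' by blast
        ultimately show ?thesis using Dl' by linarith
      qed
      have E1': "e k l' = 1\<^sub>m 1"
        using one_idem[of "e k l'"] e_carrier[OF k, of l'] Dl' d1' e_idem_l[OF k] l'(2)
        by (simp add: zcomp_DD)
      have off: "\<forall>x. x \<noteq> l \<and> x \<noteq> l' \<longrightarrow> e k x = zcomp d m x"
      proof (intro allI impI)
        fix x assume x: "x \<noteq> l \<and> x \<noteq> l'"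
        show "e k x = zcomp d m x"
        proof (rule ccontr)
          assume ex: "e k x \<noteq> zcomp d m x"
          have lx: "l \<noteq> x" "l' \<noteq> x" using x by auto
          have "\<not> length_le d m (Ssub r \<phi>) (M k) 2"
            by (rule LL3[OF k l'(1)[symmetric] lx(1) lx(2) l l'(2) ex])
          then show False using len by simp
        qed
      qed
      have "Sfac \<phi> k = {(\<lambda>x. if x = l \<or> x = l' then c \<cdot>\<^sub>m 1\<^sub>m 1 else zcomp d m x) | c. True}"
        by (rule case2[OF k l'(1)[symmetric] E1 E1' off])
      then have "\<exists>i<m. \<exists>j<m. i \<noteq> j \<and> d i = 1 \<and> d j = 1 \<and>
        Sfac \<phi> k = {(\<lambda>l. if l = i \<or> l = j then c \<cdot>\<^sub>m 1\<^sub>m 1 else zcomp d m l) | c. True}"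
        using lm lm' l'(1) d1 d1' by blast
      then show ?thesis by (intro disjI2 disjI1)
    qed
  qed
qed

end

theorem lemma1p9:
  fixes d :: "nat \<Rightarrow> nat" and m r :: nat
    and \<phi> :: "(nat \<Rightarrow> 'a::alg_closed_field) \<Rightarrow> nat \<Rightarrow> 'a mat"
  assumes d_pos: "\<forall>i<m. 0 < d i"
    and emb: "alg_embedding d m r \<phi>"
    and len: "\<forall>k<r. length_le d m (Ssub r \<phi>) (tens_mod d m \<phi> k) 2"
  shows "\<forall>k<r.
     (\<exists>i<m. Sfac \<phi> k = Scomp d m i)
   \<or> (\<exists>i<m. \<exists>j<m. i \<noteq> j \<and> d i = 1 \<and> d j = 1 \<and>
        Sfac \<phi> k = {(\<lambda>l. if l = i \<or> l = j then c \<cdot>\<^sub>m 1\<^sub>m 1 else zcomp d m l) | c. True})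
   \<or> (\<exists>q<r. q \<noteq> k \<and> (\<exists>i<m. d i = 2 \<and>
        Sfac \<phi> k \<subseteq> Scomp d m i \<and> Sfac \<phi> q \<subseteq> Scomp d m i \<and>
        (\<exists>\<psi>. mat_alg_iso 2 \<psi> \<and>
           \<psi> ` {(tadd x y) i | x y. x \<in> Sfac \<phi> k \<and> y \<in> Sfac \<phi> q} =
             {A \<in> carrier_mat 2 2. A $$ (0,1) = 0 \<and> A $$ (1,0) = 0})))"
proof -
  interpret LS d m r \<phi> using d_pos emb by (unfold_locales)
  show ?thesis
  proof (intro allI impI)
    fix k assume "k < r"
    then show "(\<exists>i<m. Sfac \<phi> k = Scomp d m i)
   \<or> (\<exists>i<m. \<exists>j<m. i \<noteq> j \<and> d i = 1 \<and> d j = 1 \<and>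
        Sfac \<phi> k = {(\<lambda>l. if l = i \<or> l = j then c \<cdot>\<^sub>m 1\<^sub>m 1 else zcomp d m l) | c. True})
   \<or> (\<exists>q<r. q \<noteq> k \<and> (\<exists>i<m. d i = 2 \<and>
        Sfac \<phi> k \<subseteq> Scomp d m i \<and> Sfac \<phi> q \<subseteq> Scomp d m i \<and>
        (\<exists>\<psi>. mat_alg_iso 2 \<psi> \<and>
           \<psi> ` {(tadd x y) i | x y. x \<in> Sfac \<phi> k \<and> y \<in> Sfac \<phi> q} =
             {A \<in> carrier_mat 2 2. A $$ (0,1) = 0 \<and> A $$ (1,0) = 0})))"
      by (rule main_k[OF len])
  qed
qed

end
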